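(* Let $G$ be a framed $4$-graph with exactly one unicursal component. Then, as an element of $\mathbb{Z}_2\mathfrak{G}$, $G$ has a unique (up to isomorphism of framed $4$-graphs) irreducible representative, i.e. a framed $4$-graph equivalent to $G$ by second Reidemeister moves to which no decreasing second Reidemeister move can be applied, and this representative can be obtained from $G$ by successively applying decreasing second Reidemeister moves. Let $G$ be an arbitrary framed $4$-graph. Then, as an element of $\widetilde{\mathbb{Z}_2\mathfrak{G}}$, $G$ is either equal to $0$ or has a unique (up to isomorphism) irreducible representative, i.e. a framed $4$-graph without circle components, equivalent to $G$ by second Reidemeister moves, to which no decreasing second Reidemeister move can be applied. In both cases the reduction can be carried out by successively applying decreasing second Reidemeister moves to $G$, and if at some stage a graph with a circle component (free loop) is obtained, then $G=0$ in $\widetilde{\mathbb{Z}_2\mathfrak{G}}$.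
   Context: A $4$-graph is a topological space with finitely many components, each of which is either a circle or a finite graph (loops and multiple edges allowed) all of whose vertices have valency four. It is framed if at each vertex the four emanating half-edges are split into two pairs of (formally) opposite half-edges. Circle components are called free loops. A unicursal component is either a circle component or an equivalence class of edges under the relation generated by: edges $a,b$ are equivalent if they are opposite at some vertex. Second Reidemeister move (decreasing version): suppose $u\neq v$ are vertices joined by two edges $e_1,e_2$ such that $e_1,e_2$ are not opposite at $u$ and not opposite at $v$. Delete $u,v,e_1,e_2$, and join the half-edge opposite to $e_1$ at $u$ with the half-edge opposite to $e_1$ at $v$, and the half-edge opposite to $e_2$ at $u$ with the half-edge opposite to $e_2$ at $v$ (the result is again a framed $4$-graph, possibly with new circle components). The increasing version is the inverse operation (it may be applied to any two edges). $\mathfrak{G}$ denotes the set of equivalence classes, modulo second Reidemeister moves, of framed $4$-graphs with one unicursal component, and $\mathbb{Z}_2\mathfrak{G}$ is the $\mathbb{Z}_2$-vector space with basis $\mathfrak{G}$. $\widetilde{\mathbb{Z}_2\mathfrak{G}}$ is the $\mathbb{Z}_2$-vector space spanned by equivalence classes of framed $4$-graphs (with any number of components) modulo second Reidemeister moves, in which every graph having a circle component is set equal to $0$. A framed graph in $\mathbb{Z}_2\mathfrak{G}$ is irreducible if no decreasing second Reidemeister move applies to it; in $\widetilde{\mathbb{Z}_2\mathfrak{G}}$ it is irreducible if it has no circle components and no decreasing second Reidemeister move applies to it. *)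

theory Defs
  imports Main
begin

text \<open>A framed 4-graph, encoded by half-edges (flags).
  fg_hes: the finite set of half-edges;
  fg_ed: pairs the two half-edges of each edge (fixed-point-free involution);
  fg_opp: pairs formally opposite half-edges at a vertex (fixed-point-free involution);
  fg_vx: vertex label of a half-edge (each vertex carries exactly four half-edges);
  fg_circ: number of circle components (free loops).
  Values of the functions outside fg_hes are irrelevant.\<close>

record fgraph =
  fg_hes :: "nat set"
  fg_ed :: "nat \<Rightarrow> nat"
  fg_opp :: "nat \<Rightarrow> nat"
  fg_vx :: "nat \<Rightarrow> nat"
  fg_circ :: nat

definition fg_wf :: "fgraph \<Rightarrow> bool" where
  "fg_wf G \<longleftrightarrow> finite (fg_hes G) \<and>
     (\<forall>h\<in>fg_hes G. fg_ed G h \<in> fg_hes G \<and> fg_ed G h \<noteq> h \<and> fg_ed G (fg_ed G h) = h) \<and>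
     (\<forall>h\<in>fg_hes G. fg_opp G h \<in> fg_hes G \<and> fg_opp G h \<noteq> h \<and> fg_opp G (fg_opp G h) = h) \<and>
     (\<forall>h\<in>fg_hes G. fg_vx G (fg_opp G h) = fg_vx G h) \<and>
     (\<forall>h\<in>fg_hes G. card {h'\<in>fg_hes G. fg_vx G h' = fg_vx G h} = 4)"

definition fg_iso :: "fgraph \<Rightarrow> fgraph \<Rightarrow> bool" where
  "fg_iso G G' \<longleftrightarrow> fg_circ G = fg_circ G' \<and>
     (\<exists>f. bij_betw f (fg_hes G) (fg_hes G') \<and>
        (\<forall>h\<in>fg_hes G. f (fg_ed G h) = fg_ed G' (f h)) \<and>
        (\<forall>h\<in>fg_hes G. f (fg_opp G h) = fg_opp G' (f h)) \<and>
        (\<forall>h\<in>fg_hes G. \<forall>h'\<in>fg_hes G. fg_vx G h = fg_vx G h' \<longleftrightarrow> fg_vx G' (f h) = fg_vx G' (f h')))"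

text \<open>Unicursal components: half-edges are linked along edges and to their opposites.\<close>
definition fg_link :: "fgraph \<Rightarrow> (nat \<times> nat) set" where
  "fg_link G = {(h, fg_ed G h) | h. h \<in> fg_hes G} \<union> {(h, fg_opp G h) | h. h \<in> fg_hes G}"

definition fg_comp :: "fgraph \<Rightarrow> nat \<Rightarrow> nat set" where
  "fg_comp G x = {y. (x, y) \<in> (fg_link G)\<^sup>*}"

definition fg_ucomp :: "fgraph \<Rightarrow> nat" where
  "fg_ucomp G = fg_circ G + card (fg_comp G ` fg_hes G)"

text \<open>A site of a decreasing second Reidemeister move: half-edges a1,a2 at vertex u,
  b1,b2 at vertex v (u \<noteq> v), edges e1 = {a1,b1}, e2 = {a2,b2}, not opposite at u nor at v.\<close>
definition r2_site :: "fgraph \<Rightarrow> nat \<Rightarrow> nat \<Rightarrow> nat \<Rightarrow> nat \<Rightarrow> bool" where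
  "r2_site G a1 a2 b1 b2 \<longleftrightarrow> fg_wf G \<and> {a1, a2, b1, b2} \<subseteq> fg_hes G \<and>
     fg_vx G a1 = fg_vx G a2 \<and> fg_vx G b1 = fg_vx G b2 \<and> fg_vx G a1 \<noteq> fg_vx G b1 \<and>
     fg_ed G a1 = b1 \<and> fg_ed G a2 = b2 \<and> a1 \<noteq> a2 \<and>
     a2 \<noteq> fg_opp G a1 \<and> b2 \<noteq> fg_opp G b1"

definition r2_del :: "fgraph \<Rightarrow> nat \<Rightarrow> nat \<Rightarrow> nat \<Rightarrow> nat \<Rightarrow> nat set" where
  "r2_del G a1 a2 b1 b2 = {a1, fg_opp G a1, a2, fg_opp G a2, b1, fg_opp G b1, b2, fg_opp G b2}"

text \<open>Result of the move: delete the half-edges at u and v; each remaining half-edge h is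
  joined to the first remaining half-edge reached by following the strand from h
  (along edges, and straight through the deleted vertices). Unicursal components lying
  entirely at u and v become new circle components.\<close>
definition r2_result :: "fgraph \<Rightarrow> nat set \<Rightarrow> fgraph" where
  "r2_result G D =
     \<lparr> fg_hes = fg_hes G - D,
       fg_ed = (\<lambda>h. ((\<lambda>x. fg_ed G (fg_opp G x)) ^^
                 (LEAST k. ((\<lambda>x. fg_ed G (fg_opp G x)) ^^ k) (fg_ed G h) \<notin> D)) (fg_ed G h)),
       fg_opp = fg_opp G,
       fg_vx = fg_vx G,
       fg_circ = fg_circ G + card {fg_comp G x | x. x \<in> D \<and> fg_comp G x \<subseteq> D} \<rparr>"

definition r2dec :: "fgraph \<Rightarrow> fgraph \<Rightarrow> bool" where
  "r2dec G G' \<longleftrightarrow> (\<exists>a1 a2 b1 b2. r2_site G a1 a2 b1 b2 \<and>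
                    G' = r2_result G (r2_del G a1 a2 b1 b2))"

definition r2eq :: "fgraph \<Rightarrow> fgraph \<Rightarrow> bool" where
  "r2eq = equivclp (\<lambda>G G'. fg_wf G \<and> fg_wf G' \<and> (fg_iso G G' \<or> r2dec G G'))"

definition r2_irreducible :: "fgraph \<Rightarrow> bool" where
  "r2_irreducible G \<longleftrightarrow> \<not> (\<exists>G'. r2dec G G')"

definition r2_irreducible_tilde :: "fgraph \<Rightarrow> bool" where
  "r2_irreducible_tilde G \<longleftrightarrow> fg_circ G = 0 \<and> \<not> (\<exists>G'. r2dec G G')"

text \<open>G = 0 in the tilde space: its R2-class contains a graph with a circle component.\<close>
definition zero_tilde :: "fgraph \<Rightarrow> bool" where
  "zero_tilde G \<longleftrightarrow> (\<exists>G'. r2eq G G' \<and> 0 < fg_circ G')"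

end

theory Submission
  imports Defs
begin

definition pp :: "fgraph \<Rightarrow> nat \<Rightarrow> nat" where
  "pp G x = fg_ed G (fg_opp G x)"

lemma funpow_split: "j \<le> n \<Longrightarrow> (f ^^ (n - j)) ((f ^^ j) x) = (f ^^ n) x"
proof -
  assume "j \<le> n"
  have "(f ^^ (n - j)) ((f ^^ j) x) = (f ^^ (n - j + j)) x" by (simp add: funpow_add)
  then show ?thesis using \<open>j \<le> n\<close> by simp
qed

locale wfg =
  fixes G :: fgraph
  assumes wf: "fg_wf G"
begin

abbreviation "H \<equiv> fg_hes G"
abbreviation "ed \<equiv> fg_ed G"
abbreviation "op \<equiv> fg_opp G"
abbreviation "P \<equiv> pp G"

lemma fin: "finite H" using wf unfolding fg_wf_def by blast
lemma ed_in: "h \<in> H \<Longrightarrow> ed h \<in> H" using wf unfolding fg_wf_def by blast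
lemma ed_neq: "h \<in> H \<Longrightarrow> ed h \<noteq> h" using wf unfolding fg_wf_def by blast
lemma ed_ed[simp]: "h \<in> H \<Longrightarrow> ed (ed h) = h" using wf unfolding fg_wf_def by blast
lemma op_in: "h \<in> H \<Longrightarrow> op h \<in> H" using wf unfolding fg_wf_def by blast
lemma op_neq: "h \<in> H \<Longrightarrow> op h \<noteq> h" using wf unfolding fg_wf_def by blast
lemma op_op[simp]: "h \<in> H \<Longrightarrow> op (op h) = h" using wf unfolding fg_wf_def by blast
lemma vx_op: "h \<in> H \<Longrightarrow> fg_vx G (op h) = fg_vx G h" using wf unfolding fg_wf_def by blast
lemma card4: "h \<in> H \<Longrightarrow> card {h'\<in>H. fg_vx G h' = fg_vx G h} = 4" using wf unfolding fg_wf_def by blast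

lemma P_in: "x \<in> H \<Longrightarrow> P x \<in> H" unfolding pp_def by (simp add: ed_in op_in)
lemma Pn_in: "x \<in> H \<Longrightarrow> (P ^^ n) x \<in> H" by (induction n) (auto simp: P_in)
lemma P_inj: "inj_on P H"
  unfolding inj_on_def pp_def by (metis op_in op_op ed_ed)
lemma Pn_inj: "x \<in> H \<Longrightarrow> y \<in> H \<Longrightarrow> (P ^^ n) x = (P ^^ n) y \<Longrightarrow> x = y"
proof (induction n arbitrary: x y)
  case (Suc n)
  have "P x = P y" using Suc.IH[of "P x" "P y"] Suc.prems P_in
    by (simp add: funpow_Suc_right del: funpow.simps)
  then show ?case using P_inj Suc.prems by (simp add: inj_on_def)
qed simp

lemma P_op_ed: "h \<in> H \<Longrightarrow> P (op h) = ed h" unfolding pp_def by simp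
lemma P_op_P: "x \<in> H \<Longrightarrow> P (op (P x)) = op x" unfolding pp_def by (simp add: op_in ed_in)
lemma Pn_op_Pn: "x \<in> H \<Longrightarrow> (P ^^ n) (op ((P ^^ n) x)) = op x"
proof (induction n arbitrary: x)
  case (Suc n)
  have e1: "(P ^^ Suc n) x = P ((P ^^ n) x)" by simp
  have e2: "(P ^^ Suc n) y = (P ^^ n) (P y)" for y by (simp only: funpow_Suc_right o_apply)
  have "(P ^^ Suc n) (op ((P ^^ Suc n) x)) = (P ^^ n) (P (op ((P ^^ Suc n) x)))"
    by (rule e2)
  also have "\<dots> = (P ^^ n) (P (op (P ((P ^^ n) x))))" by (simp only: e1)
  finally have "(P ^^ Suc n) (op ((P ^^ Suc n) x)) = (P ^^ n) (P (op (P ((P ^^ n) x))))" .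
  also have "\<dots> = (P ^^ n) (op ((P ^^ n) x))" using Suc.prems by (simp add: P_op_P Pn_in)
  finally show ?case using Suc by simp
qed simp

lemma periodic: assumes "x \<in> H" shows "\<exists>m>0. (P ^^ m) x = x"
proof -
  have "(\<lambda>n. (P ^^ n) x) ` UNIV \<subseteq> H" using Pn_in assms by auto
  hence "finite ((\<lambda>n. (P ^^ n) x) ` UNIV)" using fin finite_subset by blast
  hence "\<not> inj (\<lambda>n. (P ^^ n) x)" using finite_imageD infinite_UNIV_nat by blast
  then obtain i j where ij: "i \<noteq> j" "(P ^^ i) x = (P ^^ j) x" unfolding inj_def by blast
  have key: "\<exists>m>0. (P ^^ m) x = x" if "i < j" "(P ^^ i) x = (P ^^ j) x" for i j
  proof -
    have "(P ^^ i) ((P ^^ (j - i)) x) = (P ^^ (i + (j - i))) x" by (simp add: funpow_add)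
    also have "i + (j - i) = j" using \<open>i < j\<close> by simp
    finally have "(P ^^ i) ((P ^^ (j - i)) x) = (P ^^ i) x" using \<open>(P ^^ i) x = (P ^^ j) x\<close> by simp
    hence "(P ^^ (j - i)) x = x" using Pn_inj Pn_in assms by blast
    thus "\<exists>m>0. (P ^^ m) x = x" using \<open>i < j\<close> by (intro exI[of _ "j - i"]) simp
  qed
  show ?thesis
  proof (cases "i < j")
    case True then show ?thesis using key ij by blast
  next
    case False then have "j < i" using ij by simp
    then show ?thesis using key[of j i] ij by simp
  qed
qed

lemma never_op: assumes "h \<in> H" shows "(P ^^ n) (op h) \<noteq> h"
proof
  assume eq: "(P ^^ n) (op h) = h"
  obtain m where "n = m + m \<or> n = m + Suc m"
  proof (cases "even n")
    case True then obtain m where "n = 2 * m" by (elim evenE)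
    then show ?thesis by (intro that[of m]) simp
  next
    case False then obtain m where "n = 2 * m + 1" by (elim oddE)
    then show ?thesis by (intro that[of m]) simp
  qed
  moreover {
    assume n: "n = m + m"
    let ?z = "(P ^^ m) (op h)"
    have zin: "?z \<in> H" by (simp add: Pn_in op_in assms)
    have a: "(P ^^ m) ?z = h" using eq n by (simp add: funpow_add)
    have b: "(P ^^ m) (op ?z) = h" using Pn_op_Pn[of "op h" m] assms op_in by simp
    have "op ?z = ?z" using Pn_inj[OF op_in[OF zin] zin, of m] a b by simp
    hence False using op_neq zin by simp }
  moreover {
    assume n: "n = m + Suc m"
    let ?z = "(P ^^ m) (op h)"
    have zin: "?z \<in> H" by (simp add: Pn_in op_in assms)
    have "(P ^^ m) (P ?z) = (P ^^ (m + Suc m)) (op h)"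
      by (simp only: funpow_add o_apply funpow.simps(2))
    hence a: "(P ^^ m) (P ?z) = h" using eq n by simp
    have b: "(P ^^ m) (op ?z) = h" using Pn_op_Pn[of "op h" m] assms op_in by simp
    have "op ?z = P ?z" using Pn_inj[OF op_in[OF zin] P_in[OF zin], of m] a b by simp
    hence "ed (op ?z) = op ?z" unfolding pp_def using zin by simp
    hence False using ed_neq op_in zin by metis }
  ultimately show False by blast
qed

definition orb :: "nat \<Rightarrow> nat set" where "orb x = {(P ^^ k) x | k. True}"

lemma orb_in: "x \<in> H \<Longrightarrow> orb x \<subseteq> H" unfolding orb_def using Pn_in by blast
lemma orb_self: "x \<in> orb x" unfolding orb_def by (metis (mono_tags) funpow_0 mem_Collect_eq)

lemma link_H: "(a, b) \<in> fg_link G \<Longrightarrow> a \<in> H \<and> b \<in> H"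
  unfolding fg_link_def using ed_in op_in by blast

lemma comp_char: assumes x: "x \<in> H" shows "fg_comp G x = orb x \<union> op ` orb x"
proof
  obtain m where m: "0 < m" "(P ^^ m) x = x" using periodic x by blast
  show "fg_comp G x \<subseteq> orb x \<union> op ` orb x"
  proof
    fix z assume "z \<in> fg_comp G x"
    hence "(x, z) \<in> (fg_link G)\<^sup>*" unfolding fg_comp_def by simp
    then show "z \<in> orb x \<union> op ` orb x"
    proof (induction rule: rtrancl_induct)
      case base then show ?case using orb_self by blast
    next
      case (step y z)
      have yH: "y \<in> H" using step.hyps(2) link_H by blast
      from step.IH show ?case
      proof
        assume "y \<in> orb x"
        then obtain k where k: "y = (P ^^ k) x" unfolding orb_def by blast
        have w: "(P ^^ (k + m - 1)) x \<in> H" using Pn_in x by blast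
        have km: "Suc (k + m - 1) = k + m" using m(1) by simp
        have "P ((P ^^ (k + m - 1)) x) = (P ^^ Suc (k + m - 1)) x" by simp
        also have "\<dots> = (P ^^ (k + m)) x" by (simp only: km)
        finally have "P ((P ^^ (k + m - 1)) x) = (P ^^ (k + m)) x" .
        also have "\<dots> = y" using k m by (simp add: funpow_add)
        moreover have "P (op (ed y)) = y" unfolding pp_def using yH ed_in by simp
        ultimately have "P (op (ed y)) = P ((P ^^ (k + m - 1)) x)" by simp
        hence "op (ed y) = (P ^^ (k + m - 1)) x" using P_inj w yH op_in ed_in
          unfolding inj_on_def by blast
        hence "ed y = op ((P ^^ (k + m - 1)) x)" using yH ed_in by (metis op_op)
        hence "ed y \<in> op ` orb x" unfolding orb_def by blast
        moreover have "op y \<in> op ` orb x" using \<open>y \<in> orb x\<close> by blast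
        ultimately show ?case using step.hyps(2) unfolding fg_link_def by blast
      next
        assume "y \<in> op ` orb x"
        then obtain k where k: "y = op ((P ^^ k) x)" unfolding orb_def by blast
        have w: "(P ^^ k) x \<in> H" using Pn_in x by blast
        have "ed y = (P ^^ Suc k) x" using k unfolding pp_def by simp
        hence "ed y \<in> orb x" unfolding orb_def by blast
        moreover have "op y \<in> orb x" using k w unfolding orb_def by auto
        ultimately show ?case using step.hyps(2) unfolding fg_link_def by blast
      qed
    qed
  qed
  have r: "(x, (P ^^ k) x) \<in> (fg_link G)\<^sup>*" for k
  proof (induction k)
    case (Suc k)
    have w: "(P ^^ k) x \<in> H" using Pn_in x by blast
    have "((P ^^ k) x, op ((P ^^ k) x)) \<in> fg_link G" unfolding fg_link_def using w by blast
    moreover have "(P ^^ Suc k) x = ed (op ((P ^^ k) x))" by (simp add: pp_def)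
    moreover have "(op ((P ^^ k) x), ed (op ((P ^^ k) x))) \<in> fg_link G" unfolding fg_link_def
      using w op_in by blast
    ultimately show ?case using Suc by (metis rtrancl_into_rtrancl)
  qed simp
  show "orb x \<union> op ` orb x \<subseteq> fg_comp G x"
  proof
    fix z assume "z \<in> orb x \<union> op ` orb x"
    then show "z \<in> fg_comp G x"
    proof
      assume "z \<in> orb x" then show ?thesis using r unfolding orb_def fg_comp_def by blast
    next
      assume "z \<in> op ` orb x"
      then obtain k where k: "z = op ((P ^^ k) x)" unfolding orb_def by blast
      have w: "(P ^^ k) x \<in> H" using Pn_in x by blast
      have "((P ^^ k) x, z) \<in> fg_link G" unfolding fg_link_def using w k by blast
      then show ?thesis using r[of k] unfolding fg_comp_def by (simp add: rtrancl_into_rtrancl)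
    qed
  qed
qed

lemma comp_in: "x \<in> H \<Longrightarrow> fg_comp G x \<subseteq> H"
  using comp_char orb_in op_in by blast
lemma comp_self: "x \<in> fg_comp G x" unfolding fg_comp_def by simp

lemma link_sym: "sym (fg_link G)"
  unfolding sym_def fg_link_def using ed_in op_in by fastforce

lemma comp_eq: assumes "y \<in> fg_comp G x" shows "fg_comp G y = fg_comp G x"
proof -
  have xy: "(x, y) \<in> (fg_link G)\<^sup>*" using assms unfolding fg_comp_def by simp
  hence yx: "(y, x) \<in> (fg_link G)\<^sup>*" using sym_rtrancl[OF link_sym] unfolding sym_def by blast
  show ?thesis unfolding fg_comp_def using xy yx by (meson rtrancl_trans)
qed

lemma exit_any: "x \<in> H \<Longrightarrow> (P ^^ k) x \<notin> D \<Longrightarrow> \<exists>n>0. (P ^^ n) x \<notin> D"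
proof -
  assume x: "x \<in> H" and k: "(P ^^ k) x \<notin> D"
  obtain m where m: "0 < m" "(P ^^ m) x = x" using periodic x by blast
  have "(P ^^ (k + m)) x = (P ^^ k) x" using m by (simp add: funpow_add)
  then show ?thesis using k m by (intro exI[of _ "k + m"]) simp
qed

lemma vert4: assumes "a \<in> H" "b \<in> H" "fg_vx G b = fg_vx G a" "b \<noteq> a" "b \<noteq> op a"
  shows "{h\<in>H. fg_vx G h = fg_vx G a} = {a, op a, b, op b}"
proof -
  have sub: "{a, op a, b, op b} \<subseteq> {h\<in>H. fg_vx G h = fg_vx G a}"
    using assms op_in vx_op by auto
  have d1: "a \<noteq> op a" using op_neq[OF assms(1)] by simp
  have d2: "b \<noteq> op b" using op_neq[OF assms(2)] by simp
  have d3: "op b \<noteq> a" using op_op[OF assms(2)] assms(5) by auto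
  have d4: "op b \<noteq> op a" using op_op[OF assms(2)] op_op[OF assms(1)] assms(4) by metis
  note d = d1 d2 d3 d4
  have "card {a, op a, b, op b} = 4" using d assms by simp
  moreover have "finite {h\<in>H. fg_vx G h = fg_vx G a}" using fin by simp
  ultimately show ?thesis using card_subset_eq sub card4[OF assms(1)] by metis
qed

lemma site_del: assumes "r2_site G a1 a2 b1 b2"
  shows "r2_del G a1 a2 b1 b2 = {h\<in>H. fg_vx G h = fg_vx G a1 \<or> fg_vx G h = fg_vx G b1}"
proof -
  have in4: "a1 \<in> H" "a2 \<in> H" "b1 \<in> H" "b2 \<in> H" using assms unfolding r2_site_def by auto
  have s: "fg_vx G a1 = fg_vx G a2" "fg_vx G b1 = fg_vx G b2"
     "ed a1 = b1" "ed a2 = b2" "a1 \<noteq> a2" "a2 \<noteq> op a1" "b2 \<noteq> op b1"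
    using assms unfolding r2_site_def by auto
  have "b2 \<noteq> b1" using s in4 ed_ed by metis
  then have v: "{h\<in>H. fg_vx G h = fg_vx G b1} = {b1, op b1, b2, op b2}"
    using vert4[of b1 b2] in4 s by simp
  have u: "{h\<in>H. fg_vx G h = fg_vx G a1} = {a1, op a1, a2, op a2}"
    using vert4[of a1 a2] in4 s by simp
  have "{h\<in>H. fg_vx G h = fg_vx G a1 \<or> fg_vx G h = fg_vx G b1} =
    {h\<in>H. fg_vx G h = fg_vx G a1} \<union> {h\<in>H. fg_vx G h = fg_vx G b1}" by blast
  then show ?thesis unfolding r2_del_def using u v by auto
qed

lemma P_comp: assumes "x \<in> H" shows "P x \<in> fg_comp G x"
proof -
  have "P x = (P ^^ 1) x" by simp
  hence "P x \<in> orb x" unfolding orb_def by blast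
  then show ?thesis using comp_char[OF assms] by blast
qed
lemma op_comp: "x \<in> H \<Longrightarrow> op x \<in> fg_comp G x"
  using comp_char[of x] orb_self by blast

end

definition nxt :: "fgraph \<Rightarrow> nat set \<Rightarrow> nat \<Rightarrow> nat" where
  "nxt G D x = (pp G ^^ (LEAST j. 0 < j \<and> (pp G ^^ j) x \<notin> D)) x"

lemma nxt_eqI:
  assumes "0 < n" "(pp G ^^ n) x \<notin> D" "\<And>j. 0 < j \<Longrightarrow> j < n \<Longrightarrow> (pp G ^^ j) x \<in> D"
  shows "nxt G D x = (pp G ^^ n) x"
proof -
  have "(LEAST j. 0 < j \<and> (pp G ^^ j) x \<notin> D) = n"
    by (rule Least_equality) (use assms not_less in auto)
  then show ?thesis unfolding nxt_def by simp
qed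

lemma nxt_spec:
  assumes "\<exists>n>0. (pp G ^^ n) x \<notin> D"
  shows "\<exists>n. 0 < n \<and> (pp G ^^ n) x \<notin> D \<and> (\<forall>j. 0 < j \<and> j < n \<longrightarrow> (pp G ^^ j) x \<in> D)
           \<and> nxt G D x = (pp G ^^ n) x"
proof -
  let ?n = "LEAST j. 0 < j \<and> (pp G ^^ j) x \<notin> D"
  have a: "0 < ?n \<and> (pp G ^^ ?n) x \<notin> D" using assms by (metis (mono_tags, lifting) LeastI)
  have b: "\<forall>j. 0 < j \<and> j < ?n \<longrightarrow> (pp G ^^ j) x \<in> D" using not_less_Least by blast
  show ?thesis using a b unfolding nxt_def by blast
qed

lemma nxt_first: "pp G x \<notin> D \<Longrightarrow> nxt G D x = pp G x"
  using nxt_eqI[of 1 G x D] by simp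

lemma nxt_step:
  assumes "\<exists>n>0. (pp G ^^ n) x \<notin> D" "pp G x \<in> D"
  shows "nxt G D x = nxt G D (pp G x)"
proof -
  obtain n where n: "0 < n" "(pp G ^^ n) x \<notin> D" "\<forall>j. 0 < j \<and> j < n \<longrightarrow> (pp G ^^ j) x \<in> D"
    "nxt G D x = (pp G ^^ n) x" using nxt_spec[OF assms(1)] by blast
  have "n \<noteq> 1" using n assms(2) by auto
  hence n2: "1 < n" using n by simp
  have e: "(pp G ^^ k) (pp G x) = (pp G ^^ Suc k) x" for k by (simp only: funpow_Suc_right o_apply)
  have "nxt G D (pp G x) = (pp G ^^ (n - 1)) (pp G x)"
  proof (rule nxt_eqI)
    show "0 < n - 1" using n2 by simp
    have "Suc (n - 1) = n" using n2 by simp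
    then show "(pp G ^^ (n - 1)) (pp G x) \<notin> D" using n by (simp only: e) simp
    show "(pp G ^^ j) (pp G x) \<in> D" if "0 < j" "j < n - 1" for j
    proof -
      have "(pp G ^^ Suc j) x \<in> D" using n(3)[rule_format, of "Suc j"] that by simp
      then show ?thesis by (simp only: e)
    qed
  qed
  also have "\<dots> = (pp G ^^ n) x" using n2 by (simp only: e) simp
  finally show ?thesis using n by simp
qed

locale wfgD = wfg +
  fixes D :: "nat set"
  assumes DH: "D \<subseteq> fg_hes G"
    and Dv: "h \<in> D \<Longrightarrow> h' \<in> fg_hes G \<Longrightarrow> fg_vx G h' = fg_vx G h \<Longrightarrow> h' \<in> D"
begin

lemma op_D: "h \<in> H \<Longrightarrow> op h \<in> D \<longleftrightarrow> h \<in> D"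
  using Dv vx_op op_in DH by (metis op_op subsetD)

lemma ex_exit: "x \<in> H \<Longrightarrow> x \<notin> D \<Longrightarrow> \<exists>n>0. (P ^^ n) x \<notin> D"
  using periodic by metis

lemma pp_eq: "pp G = (\<lambda>x. ed (op x))" unfolding pp_def by (rule ext) simp

lemma res_ed: assumes "h \<in> H" "h \<notin> D"
  shows "fg_ed (r2_result G D) h = nxt G D (op h)"
proof -
  have ex: "\<exists>n>0. (P ^^ n) (op h) \<notin> D" using ex_exit op_in op_D assms by blast
  then obtain n where "0 < n \<and> (P ^^ n) (op h) \<notin> D" by blast
  have e: "(P ^^ Suc k) (op h) = (P ^^ k) (ed h)" for k
    by (simp only: funpow_Suc_right o_apply P_op_ed[OF assms(1)])
  have "(LEAST j. 0 < j \<and> (P ^^ j) (op h) \<notin> D) = Suc (LEAST m. 0 < Suc m \<and> (P ^^ Suc m) (op h) \<notin> D)"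
    using \<open>0 < n \<and> _\<close> by (rule Least_Suc) simp
  hence "nxt G D (op h) = (P ^^ Suc (LEAST m. (P ^^ m) (ed h) \<notin> D)) (op h)"
    unfolding nxt_def by (simp only: e) simp
  also have "\<dots> = (P ^^ (LEAST m. (P ^^ m) (ed h) \<notin> D)) (ed h)" by (simp only: e)
  finally show ?thesis unfolding r2_result_def by (simp add: pp_eq)
qed

lemma nxt_in: assumes "x \<in> H" "x \<notin> D" shows "nxt G D x \<in> H" "nxt G D x \<notin> D"
  using nxt_spec[OF ex_exit[OF assms]] Pn_in assms by auto

lemma nxt_back: assumes "h \<in> H" "h \<notin> D"
  shows "nxt G D (op (nxt G D (op h))) = h"
proof -
  have hop: "op h \<in> H" "op h \<notin> D" using assms op_in op_D by auto
  obtain n where n: "0 < n" "(P ^^ n) (op h) \<notin> D" "\<forall>j. 0 < j \<and> j < n \<longrightarrow> (P ^^ j) (op h) \<in> D"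
    "nxt G D (op h) = (P ^^ n) (op h)" using nxt_spec[OF ex_exit[OF hop]] by blast
  have "nxt G D (op ((P ^^ n) (op h))) = (P ^^ n) (op ((P ^^ n) (op h)))"
  proof (rule nxt_eqI)
    show "0 < n" by fact
    show "(P ^^ n) (op ((P ^^ n) (op h))) \<notin> D" using Pn_op_Pn[OF hop(1)] assms by simp
    show "(P ^^ j) (op ((P ^^ n) (op h))) \<in> D" if "0 < j" "j < n" for j
    proof -
      have "(P ^^ j) ((P ^^ (n - j)) (op h)) = (P ^^ (j + (n - j))) (op h)"
        by (simp add: funpow_add)
      hence "(P ^^ n) (op h) = (P ^^ j) ((P ^^ (n - j)) (op h))" using that by simp
      hence "(P ^^ j) (op ((P ^^ n) (op h))) = op ((P ^^ (n - j)) (op h))"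
        using Pn_op_Pn Pn_in hop by simp
      moreover have "(P ^^ (n - j)) (op h) \<in> D" using n that by simp
      ultimately show ?thesis using op_D Pn_in hop by simp
    qed
  qed
  then show ?thesis using n Pn_op_Pn[OF hop(1)] assms by simp
qed

lemma nxt_neq: assumes "h \<in> H" "h \<notin> D" shows "nxt G D (op h) \<noteq> h"
proof -
  have hop: "op h \<in> H" "op h \<notin> D" using assms op_in op_D by auto
  obtain n where "nxt G D (op h) = (P ^^ n) (op h)" using nxt_spec[OF ex_exit[OF hop]] by blast
  then show ?thesis using never_op assms by simp
qed

lemma res_hes[simp]: "fg_hes (r2_result G D) = H - D"
  and res_opp[simp]: "fg_opp (r2_result G D) = op"
  and res_vx[simp]: "fg_vx (r2_result G D) = fg_vx G"
  by (simp_all add: r2_result_def)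

lemma res_wf: "fg_wf (r2_result G D)"
proof -
  have c: "{h' \<in> H - D. fg_vx G h' = fg_vx G h} = {h' \<in> H. fg_vx G h' = fg_vx G h}" if "h \<in> H - D" for h
  proof (rule set_eqI, rule iffI)
    fix x assume "x \<in> {h' \<in> H. fg_vx G h' = fg_vx G h}"
    then show "x \<in> {h' \<in> H - D. fg_vx G h' = fg_vx G h}" using that Dv[of x h] by auto
  qed auto
  have opD: "op h \<in> H - D" if "h \<in> H - D" for h using that op_in op_D by blast
  have edin: "fg_ed (r2_result G D) h \<in> H - D" if "h \<in> H - D" for h
    using that res_ed[of h] nxt_in[of "op h"] opD[OF that] by simp
  have edn: "fg_ed (r2_result G D) h \<noteq> h" if "h \<in> H - D" for h
    using that res_ed[of h] nxt_neq[of h] by simp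
  have eded: "fg_ed (r2_result G D) (fg_ed (r2_result G D) h) = h" if "h \<in> H - D" for h
  proof -
    have "fg_ed (r2_result G D) (fg_ed (r2_result G D) h) = nxt G D (op (nxt G D (op h)))"
      using that edin[OF that] res_ed[of h] res_ed[of "fg_ed (r2_result G D) h"] by simp
    then show ?thesis using nxt_back that by simp
  qed
  show ?thesis unfolding fg_wf_def res_hes res_opp res_vx
  proof (intro conjI ballI)
    show "finite (H - D)" using fin by simp
  next
    fix h assume h: "h \<in> H - D"
    show "fg_ed (r2_result G D) h \<in> H - D" by (rule edin[OF h])
    show "fg_ed (r2_result G D) h \<noteq> h" by (rule edn[OF h])
    show "fg_ed (r2_result G D) (fg_ed (r2_result G D) h) = h" by (rule eded[OF h])
    show "op h \<in> H - D" by (rule opD[OF h])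
    show "op h \<noteq> h" using h op_neq by blast
    show "op (op h) = h" using h by simp
    show "fg_vx G (op h) = fg_vx G h" using h vx_op by blast
    show "card {h' \<in> H - D. fg_vx G h' = fg_vx G h} = 4" using c[OF h] card4 h by simp
  qed
qed

sublocale R: wfg "r2_result G D" by (rule wfg.intro[OF res_wf])

lemma pp_res: "x \<in> H \<Longrightarrow> x \<notin> D \<Longrightarrow> pp (r2_result G D) x = nxt G D x"
  unfolding pp_def[of "r2_result G D"] using res_ed[of "op x"] op_in op_D by simp

lemma orb_res: assumes "x \<in> H" "x \<notin> D" shows "R.orb x = orb x - D"
proof
  show "R.orb x \<subseteq> orb x - D"
  proof
    fix y assume "y \<in> R.orb x"
    then obtain k where k: "y = (pp (r2_result G D) ^^ k) x" unfolding R.orb_def by blast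
    have "(pp (r2_result G D) ^^ k) x \<in> orb x - D" for k
    proof (induction k)
      case 0 then show ?case using assms orb_self by simp
    next
      case (Suc k)
      let ?y = "(pp (r2_result G D) ^^ k) x"
      obtain i where i: "?y = (P ^^ i) x" "?y \<notin> D" using Suc unfolding orb_def by blast
      have yH: "?y \<in> H" using i Pn_in assms by simp
      obtain n where n: "nxt G D ?y = (P ^^ n) ?y" "(P ^^ n) ?y \<notin> D"
        using nxt_spec[OF ex_exit[OF yH i(2)]] by blast
      have "(pp (r2_result G D) ^^ Suc k) x = (P ^^ (n + i)) x"
        using pp_res[OF yH i(2)] n i by (simp add: funpow_add)
      moreover have "(P ^^ (n + i)) x = (P ^^ n) ?y" using i by (simp add: funpow_add)
      ultimately have "(pp (r2_result G D) ^^ Suc k) x = (P ^^ (n + i)) x"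
        "(pp (r2_result G D) ^^ Suc k) x \<notin> D" using n by simp_all
      then show ?case unfolding orb_def by blast
    qed
    then show "y \<in> orb x - D" using k by simp
  qed
next
  have "\<forall>x. x \<in> H \<longrightarrow> x \<notin> D \<longrightarrow> (P ^^ n) x \<notin> D \<longrightarrow> (P ^^ n) x \<in> R.orb x" for n
  proof (induction n rule: less_induct)
    case (less n)
    show ?case
    proof (intro allI impI)
      fix x assume x: "x \<in> H" "x \<notin> D" and nD: "(P ^^ n) x \<notin> D"
      show "(P ^^ n) x \<in> R.orb x"
      proof (cases "n = 0")
        case True then show ?thesis using R.orb_self by simp
      next
        case False
        obtain j where j: "0 < j" "(P ^^ j) x \<notin> D" "\<forall>i. 0 < i \<and> i < j \<longrightarrow> (P ^^ i) x \<in> D"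
          "nxt G D x = (P ^^ j) x" using nxt_spec[OF ex_exit[OF x]] by blast
        have jn: "j \<le> n" using j(3) False nD by (meson not_le neq0_conv)
        let ?x = "(P ^^ j) x"
        have x': "?x \<in> H" "?x \<notin> D" using j Pn_in x by auto
        have e: "(P ^^ (n - j)) ?x = (P ^^ n) x" using jn by (rule funpow_split)
        have "(P ^^ (n - j)) ?x \<in> R.orb ?x" 
        proof -
          have "n - j < n" using j(1) False by simp
          hence "(P ^^ (n - j)) ?x \<notin> D \<longrightarrow> (P ^^ (n - j)) ?x \<in> R.orb ?x"
            using less.IH x' by blast
          then show ?thesis using e nD by simp
        qed
        moreover have "?x = pp (r2_result G D) x" using pp_res[OF x] j(4) by simp
        moreover have "R.orb (pp (r2_result G D) x) \<subseteq> R.orb x"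
        proof
          fix z assume "z \<in> R.orb (pp (r2_result G D) x)"
          then obtain k where "z = (pp (r2_result G D) ^^ k) (pp (r2_result G D) x)" unfolding R.orb_def by blast
          hence "z = (pp (r2_result G D) ^^ Suc k) x" by (simp only: funpow_Suc_right o_apply)
          then show "z \<in> R.orb x" unfolding R.orb_def by blast
        qed
        ultimately show ?thesis using e by auto
      qed
    qed
  qed
  then show "orb x - D \<subseteq> R.orb x" using assms unfolding orb_def by blast
qed

lemma comp_res: assumes "x \<in> H" "x \<notin> D"
  shows "fg_comp (r2_result G D) x = fg_comp G x - D"
proof -
  have "fg_comp (r2_result G D) x = R.orb x \<union> op ` R.orb x"
    using R.comp_char[of x] assms by simp
  also have "\<dots> = (orb x - D) \<union> op ` (orb x - D)" using orb_res[OF assms] by simp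
  also have "\<dots> = (orb x \<union> op ` orb x) - D"
    using op_D orb_in[OF assms(1)] by auto
  finally show ?thesis using comp_char[OF assms(1)] by simp
qed

end

definition cc :: "fgraph \<Rightarrow> nat set \<Rightarrow> nat set set" where
  "cc G D = {fg_comp G x | x. x \<in> D \<and> fg_comp G x \<subseteq> D}"

lemma circ_res: "fg_circ (r2_result G D) = fg_circ G + card (cc G D)"
  unfolding r2_result_def cc_def by simp

lemma iso_idI:
  assumes "fg_circ A = fg_circ B" "fg_hes A = fg_hes B"
    "\<And>h. h \<in> fg_hes A \<Longrightarrow> fg_ed A h = fg_ed B h"
    "\<And>h. h \<in> fg_hes A \<Longrightarrow> fg_opp A h = fg_opp B h"
    "\<And>h. h \<in> fg_hes A \<Longrightarrow> fg_vx A h = fg_vx B h"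
  shows "fg_iso A B"
  unfolding fg_iso_def using assms by (intro conjI exI[of _ id]) (auto simp: bij_betw_def)

locale wfg2 = wfg +
  fixes D1 D2 :: "nat set"
  assumes D1H: "D1 \<subseteq> fg_hes G"
    and D1v: "h \<in> D1 \<Longrightarrow> h' \<in> fg_hes G \<Longrightarrow> fg_vx G h' = fg_vx G h \<Longrightarrow> h' \<in> D1"
    and D2H: "D2 \<subseteq> fg_hes G"
    and D2v: "h \<in> D2 \<Longrightarrow> h' \<in> fg_hes G \<Longrightarrow> fg_vx G h' = fg_vx G h \<Longrightarrow> h' \<in> D2"
    and disj: "D1 \<inter> D2 = {}"
begin

sublocale A: wfgD G D1 by unfold_locales (use D1H D1v in auto)
sublocale C: wfgD G "D1 \<union> D2" proof unfold_locales
  show "D1 \<union> D2 \<subseteq> H" using D1H D2H by simp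
  fix h h' assume "h \<in> D1 \<union> D2" "h' \<in> H" "fg_vx G h' = fg_vx G h"
  then show "h' \<in> D1 \<union> D2" using D1v[of h h'] D2v[of h h'] by blast
qed
sublocale B: wfgD "r2_result G D1" D2 proof unfold_locales
  show "D2 \<subseteq> fg_hes (r2_result G D1)" using D2H disj by auto
  fix h h' assume "h \<in> D2" "h' \<in> fg_hes (r2_result G D1)"
    "fg_vx (r2_result G D1) h' = fg_vx (r2_result G D1) h"
  then show "h' \<in> D2" using D2v[of h h'] by simp
qed

lemma nxt_comp_aux:
  "\<forall>x. x \<in> H \<and> x \<notin> D1 \<and> 0 < n \<and> (P ^^ n) x \<notin> D1 \<union> D2 \<and>
      (\<forall>j. 0 < j \<and> j < n \<longrightarrow> (P ^^ j) x \<in> D1 \<union> D2)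
      \<longrightarrow> nxt (r2_result G D1) D2 x = (P ^^ n) x"
proof (induction n rule: less_induct)
  case (less n)
  show ?case
  proof (intro allI impI, elim conjE)
    fix x assume x: "x \<in> H" "x \<notin> D1" and n: "0 < n" "(P ^^ n) x \<notin> D1 \<union> D2"
      and mid: "\<forall>j. 0 < j \<and> j < n \<longrightarrow> (P ^^ j) x \<in> D1 \<union> D2"
    obtain j where j: "0 < j" "(P ^^ j) x \<notin> D1" "\<forall>i. 0 < i \<and> i < j \<longrightarrow> (P ^^ i) x \<in> D1"
      "nxt G D1 x = (P ^^ j) x" using nxt_spec[OF A.ex_exit[OF x]] by blast
    have jn: "j \<le> n" using j(3) n by (meson UnCI not_le)
    let ?x = "(P ^^ j) x"
    have x': "?x \<in> H" "?x \<notin> D1" using j Pn_in x by auto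
    have px: "pp (r2_result G D1) x = ?x" using A.pp_res[OF x] j(4) by simp
    show "nxt (r2_result G D1) D2 x = (P ^^ n) x"
    proof (cases "j = n")
      case True
      then have "pp (r2_result G D1) x \<notin> D2" using px n by simp
      then show ?thesis using nxt_first px True by metis
    next
      case False
      hence jn': "j < n" using jn by simp
      have x'D2: "?x \<in> D2" using mid j(1) jn' x'(2) by blast
      have "(P ^^ n) x \<in> orb x - D1" using n unfolding orb_def by blast
      hence "(P ^^ n) x \<in> A.R.orb x" using A.orb_res[OF x] by simp
      then obtain k where k: "(pp (r2_result G D1) ^^ k) x = (P ^^ n) x" unfolding A.R.orb_def by auto
      have ex: "\<exists>m>0. (pp (r2_result G D1) ^^ m) x \<notin> D2"
        using A.R.exit_any[of x k D2] k n x by simp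
      have "nxt (r2_result G D1) D2 x = nxt (r2_result G D1) D2 ?x"
        using nxt_step[OF ex] px x'D2 by simp
      also have "\<dots> = (P ^^ (n - j)) ?x"
      proof -
        have "n - j < n" using j(1) jn' by simp
        moreover have "(P ^^ (n - j)) ?x = (P ^^ n) x" using jn by (rule funpow_split)
        moreover have "\<forall>i. 0 < i \<and> i < n - j \<longrightarrow> (P ^^ i) ?x \<in> D1 \<union> D2"
        proof (intro allI impI)
          fix i assume i: "0 < i \<and> i < n - j"
          have "(P ^^ i) ?x = (P ^^ (i + j)) x" by (simp add: funpow_add)
          moreover have "0 < i + j \<and> i + j < n" using i jn by linarith
          ultimately show "(P ^^ i) ?x \<in> D1 \<union> D2" using mid by simp
        qed
        ultimately show ?thesis using less.IH[of "n - j"] x' n jn' by simp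
      qed
      also have "\<dots> = (P ^^ n) x" using jn by (rule funpow_split)
      finally show ?thesis .
    qed
  qed
qed

lemma nxt_comp: assumes "x \<in> H" "x \<notin> D1 \<union> D2"
  shows "nxt (r2_result G D1) D2 x = nxt G (D1 \<union> D2) x"
proof -
  obtain n where n: "0 < n" "(P ^^ n) x \<notin> D1 \<union> D2" "\<forall>j. 0 < j \<and> j < n \<longrightarrow> (P ^^ j) x \<in> D1 \<union> D2"
      "nxt G (D1 \<union> D2) x = (P ^^ n) x" using nxt_spec[OF C.ex_exit[OF assms]] by blast
  then show ?thesis using nxt_comp_aux[of n] assms by simp
qed

lemma cc_fin: "finite (cc G D)" if "D \<subseteq> H" for D
proof -
  have "cc G D \<subseteq> Pow H" unfolding cc_def using that by auto
  then show ?thesis using fin by (meson finite_Pow_iff finite_subset)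
qed

lemma cc_comp: "card (cc G D1) + card (cc (r2_result G D1) D2) = card (cc G (D1 \<union> D2))"
proof -
  define X where "X = {K \<in> cc G (D1 \<union> D2). \<not> K \<subseteq> D1}"
  have split: "cc G (D1 \<union> D2) = cc G D1 \<union> X"
  proof
    show "cc G (D1 \<union> D2) \<subseteq> cc G D1 \<union> X"
    proof
      fix K assume K: "K \<in> cc G (D1 \<union> D2)"
      show "K \<in> cc G D1 \<union> X"
      proof (cases "K \<subseteq> D1")
        case True
        obtain x where "K = fg_comp G x" "x \<in> D1 \<union> D2" using K unfolding cc_def by blast
        then have "x \<in> D1" using True comp_self by blast
        then show ?thesis using True \<open>K = _\<close> unfolding cc_def by blast
      qed (use K X_def in blast)
    qed
    show "cc G D1 \<union> X \<subseteq> cc G (D1 \<union> D2)" unfolding X_def cc_def by blast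
  qed
  have dis: "cc G D1 \<inter> X = {}" unfolding X_def cc_def by blast
  have bij: "bij_betw (\<lambda>K. K - D1) X (cc (r2_result G D1) D2)"
  proof (rule bij_betw_imageI)
    show "inj_on (\<lambda>K. K - D1) X"
    proof (rule inj_onI)
      fix K K' assume K: "K \<in> X" and K': "K' \<in> X" and eq: "K - D1 = K' - D1"
      obtain z where z: "z \<in> K" "z \<notin> D1" using K unfolding X_def by blast
      obtain x where x: "K = fg_comp G x" using K unfolding X_def cc_def by blast
      obtain x' where x': "K' = fg_comp G x'" using K' unfolding X_def cc_def by blast
      have "z \<in> K'" using eq z by blast
      then show "K = K'" using comp_eq z x x' by metis
    qed
    show "(\<lambda>K. K - D1) ` X = cc (r2_result G D1) D2"
    proof
      show "(\<lambda>K. K - D1) ` X \<subseteq> cc (r2_result G D1) D2"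
      proof
        fix L assume "L \<in> (\<lambda>K. K - D1) ` X"
        then obtain K where K: "K \<in> X" "L = K - D1" by blast
        obtain z where z: "z \<in> K" "z \<notin> D1" using K unfolding X_def by blast
        obtain x where x: "K = fg_comp G x" "K \<subseteq> D1 \<union> D2" using K unfolding X_def cc_def by blast
        have zK: "fg_comp G z = K" using comp_eq z x by metis
        have zD2: "z \<in> D2" using z x by blast
        hence zH: "z \<in> H" using D2H by blast
        have "fg_comp (r2_result G D1) z = L" using A.comp_res[OF zH z(2)] zK K by simp
        moreover have "L \<subseteq> D2" using K x by blast
        ultimately show "L \<in> cc (r2_result G D1) D2" unfolding cc_def using zD2 by blast
      qed
      show "cc (r2_result G D1) D2 \<subseteq> (\<lambda>K. K - D1) ` X"
      proof
        fix L assume "L \<in> cc (r2_result G D1) D2"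
        then obtain z where z: "L = fg_comp (r2_result G D1) z" "z \<in> D2" "L \<subseteq> D2"
          unfolding cc_def by blast
        have zH: "z \<in> H" "z \<notin> D1" using z D2H disj by auto
        have L: "L = fg_comp G z - D1" using A.comp_res[OF zH] z by simp
        have "fg_comp G z \<subseteq> D1 \<union> D2" using L z(3) by blast
        moreover have "\<not> fg_comp G z \<subseteq> D1" using comp_self zH by blast
        ultimately have "fg_comp G z \<in> X" unfolding X_def cc_def using z(2) by blast
        then show "L \<in> (\<lambda>K. K - D1) ` X" using L by blast
      qed
    qed
  qed
  have finX: "finite X" using cc_fin[of "D1 \<union> D2"] D1H D2H split by simp
  have "card (cc G (D1 \<union> D2)) = card (cc G D1) + card X"
    using split dis card_Un_disjoint cc_fin[OF D1H] finX by metis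
  moreover have "card X = card (cc (r2_result G D1) D2)" using bij_betw_same_card[OF bij] .
  ultimately show ?thesis by simp
qed

lemma res_comp: "fg_iso (r2_result (r2_result G D1) D2) (r2_result G (D1 \<union> D2))"
proof (rule iso_idI)
  show "fg_circ (r2_result (r2_result G D1) D2) = fg_circ (r2_result G (D1 \<union> D2))"
    using cc_comp by (simp add: circ_res)
  show "fg_hes (r2_result (r2_result G D1) D2) = fg_hes (r2_result G (D1 \<union> D2))" by auto
  fix h assume h: "h \<in> fg_hes (r2_result (r2_result G D1) D2)"
  hence h': "h \<in> H" "h \<notin> D1 \<union> D2" by auto
  have "fg_ed (r2_result (r2_result G D1) D2) h = nxt (r2_result G D1) D2 (op h)"
    using B.res_ed h' by simp
  also have "\<dots> = nxt G (D1 \<union> D2) (op h)" 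
  proof -
    have "op h \<in> H" "op h \<notin> D1 \<union> D2" using op_in[of h] C.op_D[of h] h' by auto
    then show ?thesis using nxt_comp by simp
  qed
  also have "\<dots> = fg_ed (r2_result G (D1 \<union> D2)) h" using C.res_ed h' by simp
  finally show "fg_ed (r2_result (r2_result G D1) D2) h = fg_ed (r2_result G (D1 \<union> D2)) h" .
qed simp_all

end

locale isog = g1: wfg G + g2: wfg G' for G G' +
  fixes f :: "nat \<Rightarrow> nat"
  assumes bij: "bij_betw f (fg_hes G) (fg_hes G')"
    and f_ed: "h \<in> fg_hes G \<Longrightarrow> f (fg_ed G h) = fg_ed G' (f h)"
    and f_op: "h \<in> fg_hes G \<Longrightarrow> f (fg_opp G h) = fg_opp G' (f h)"
    and f_vx: "h \<in> fg_hes G \<Longrightarrow> h' \<in> fg_hes G \<Longrightarrow> fg_vx G h = fg_vx G h' \<longleftrightarrow> fg_vx G' (f h) = fg_vx G' (f h')"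
begin

lemma f_in: "x \<in> fg_hes G \<Longrightarrow> f x \<in> fg_hes G'" using bij bij_betwE by blast
lemma f_inj: "x \<in> fg_hes G \<Longrightarrow> y \<in> fg_hes G \<Longrightarrow> f x = f y \<longleftrightarrow> x = y"
  using bij unfolding bij_betw_def inj_on_def by blast
lemma f_img: "f ` fg_hes G = fg_hes G'" using bij unfolding bij_betw_def by blast

lemma f_P: "x \<in> fg_hes G \<Longrightarrow> f (pp G x) = pp G' (f x)"
  unfolding pp_def using f_ed f_op g1.op_in by simp

lemma f_Pn: "x \<in> fg_hes G \<Longrightarrow> f ((pp G ^^ n) x) = (pp G' ^^ n) (f x)"
  by (induction n) (simp_all add: f_P g1.Pn_in)

lemma f_mem: "x \<in> fg_hes G \<Longrightarrow> D \<subseteq> fg_hes G \<Longrightarrow> f x \<in> f ` D \<longleftrightarrow> x \<in> D"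
  using f_inj by blast

lemma f_nxt: assumes "D \<subseteq> fg_hes G" "x \<in> fg_hes G" "\<exists>n>0. (pp G ^^ n) x \<notin> D"
  shows "f (nxt G D x) = nxt G' (f ` D) (f x)"
proof -
  obtain n where n: "0 < n" "(pp G ^^ n) x \<notin> D" "\<forall>j. 0 < j \<and> j < n \<longrightarrow> (pp G ^^ j) x \<in> D"
    "nxt G D x = (pp G ^^ n) x" using nxt_spec[OF assms(3)] by blast
  have "nxt G' (f ` D) (f x) = (pp G' ^^ n) (f x)"
  proof (rule nxt_eqI)
    show "0 < n" by fact
    show "(pp G' ^^ n) (f x) \<notin> f ` D" using n f_Pn[OF assms(2)] f_mem g1.Pn_in assms by metis
    show "(pp G' ^^ j) (f x) \<in> f ` D" if "0 < j" "j < n" for j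
      using n that f_Pn[OF assms(2)] by (metis imageI)
  qed
  then show ?thesis using n f_Pn[OF assms(2)] by simp
qed

lemma f_orb: assumes "x \<in> fg_hes G" shows "f ` g1.orb x = g2.orb (f x)"
proof
  show "f ` g1.orb x \<subseteq> g2.orb (f x)" unfolding g1.orb_def g2.orb_def using f_Pn[OF assms] by auto
  show "g2.orb (f x) \<subseteq> f ` g1.orb x"
  proof
    fix z assume "z \<in> g2.orb (f x)"
    then obtain k where "z = (pp G' ^^ k) (f x)" unfolding g2.orb_def by blast
    hence "z = f ((pp G ^^ k) x)" using f_Pn[OF assms] by simp
    then show "z \<in> f ` g1.orb x" unfolding g1.orb_def by blast
  qed
qed

lemma f_comp: assumes "x \<in> fg_hes G" shows "f ` fg_comp G x = fg_comp G' (f x)"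
proof -
  have "f ` fg_comp G x = f ` g1.orb x \<union> f ` (fg_opp G ` g1.orb x)"
    using g1.comp_char[OF assms] by (simp add: image_Un)
  also have "f ` (fg_opp G ` g1.orb x) = fg_opp G' ` (f ` g1.orb x)"
    using f_op g1.orb_in[OF assms] by (force simp: image_image)
  finally show ?thesis using g2.comp_char f_in assms f_orb by simp
qed

lemma f_cc: assumes "D \<subseteq> fg_hes G" shows "cc G' (f ` D) = image f ` cc G D"
proof
  show "cc G' (f ` D) \<subseteq> image f ` cc G D"
  proof
    fix K assume "K \<in> cc G' (f ` D)"
    then obtain y where y: "K = fg_comp G' y" "y \<in> f ` D" "K \<subseteq> f ` D" unfolding cc_def by blast
    then obtain x where x: "x \<in> D" "y = f x" by blast
    have xH: "x \<in> fg_hes G" using x assms by blast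
    have K: "K = f ` fg_comp G x" using f_comp[OF xH] x y by simp
    have "fg_comp G x \<subseteq> D"
    proof
      fix z assume z: "z \<in> fg_comp G x"
      hence "f z \<in> f ` D" using K y by blast
      moreover have "z \<in> fg_hes G" using z g1.comp_in xH by blast
      ultimately show "z \<in> D" using f_mem assms by blast
    qed
    then show "K \<in> image f ` cc G D" unfolding cc_def using K x by blast
  qed
  show "image f ` cc G D \<subseteq> cc G' (f ` D)"
  proof
    fix K assume "K \<in> image f ` cc G D"
    then obtain x where x: "K = f ` fg_comp G x" "x \<in> D" "fg_comp G x \<subseteq> D" unfolding cc_def by blast
    have xH: "x \<in> fg_hes G" using x assms by blast
    show "K \<in> cc G' (f ` D)" unfolding cc_def using f_comp[OF xH] x by blast
  qed
qed

lemma f_card_cc: assumes "D \<subseteq> fg_hes G" shows "card (cc G' (f ` D)) = card (cc G D)"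
proof -
  have "cc G D \<subseteq> Pow (fg_hes G)" unfolding cc_def using assms by auto
  moreover have "inj_on (image f) (Pow (fg_hes G))"
    using bij inj_on_image_Pow unfolding bij_betw_def by blast
  ultimately have "inj_on (image f) (cc G D)" using inj_on_subset by blast
  then show ?thesis using f_cc[OF assms] card_image by metis
qed

lemma iso: "fg_circ G = fg_circ G' \<Longrightarrow> fg_iso G G'"
  unfolding fg_iso_def using bij f_ed f_op f_vx by blast

lemma res_iso: assumes D: "D \<subseteq> fg_hes G"
    and Dv: "\<And>h h'. h \<in> D \<Longrightarrow> h' \<in> fg_hes G \<Longrightarrow> fg_vx G h' = fg_vx G h \<Longrightarrow> h' \<in> D"
    and circ: "fg_circ G = fg_circ G'"
  shows "fg_iso (r2_result G D) (r2_result G' (f ` D))"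
proof -
  interpret a: wfgD G D by unfold_locales (use D Dv in auto)
  have fD: "f ` D \<subseteq> fg_hes G'" using D f_in by blast
  interpret b: wfgD G' "f ` D"
  proof unfold_locales
    show "f ` D \<subseteq> fg_hes G'" by fact
    fix h h' assume h: "h \<in> f ` D" "h' \<in> fg_hes G'" "fg_vx G' h' = fg_vx G' h"
    obtain x where x: "x \<in> D" "h = f x" using h by blast
    obtain x' where x': "x' \<in> fg_hes G" "h' = f x'" using h f_img by blast
    have "fg_vx G x' = fg_vx G x" using f_vx[of x' x] x x' h D by blast
    then show "h' \<in> f ` D" using Dv[OF x(1) x'(1)] x' by blast
  qed
  interpret c: isog "r2_result G D" "r2_result G' (f ` D)" f
  proof unfold_locales
    have "inj_on f (fg_hes G)" using bij bij_betw_def by blast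
    hence "f ` (fg_hes G - D) = f ` fg_hes G - f ` D" using D by (simp add: inj_on_image_set_diff)
    then show "bij_betw f (fg_hes (r2_result G D)) (fg_hes (r2_result G' (f ` D)))"
      using bij_betw_subset[OF bij, of "fg_hes G - D"] f_img by simp
  next
    fix h assume h: "h \<in> fg_hes (r2_result G D)"
    hence h': "h \<in> fg_hes G" "h \<notin> D" by auto
    have fh: "f h \<in> fg_hes G'" "f h \<notin> f ` D" using h' f_in[of h] f_mem[of h D] D by auto
    have oh: "fg_opp G h \<in> fg_hes G" "fg_opp G h \<notin> D" using h' g1.op_in a.op_D by auto
    have "f (fg_ed (r2_result G D) h) = f (nxt G D (fg_opp G h))" using a.res_ed h' by simp
    also have "\<dots> = nxt G' (f ` D) (f (fg_opp G h))"
      using f_nxt[OF D oh(1) a.ex_exit[OF oh]] .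
    also have "\<dots> = fg_ed (r2_result G' (f ` D)) (f h)" using b.res_ed fh f_op h' by simp
    finally show "f (fg_ed (r2_result G D) h) = fg_ed (r2_result G' (f ` D)) (f h)" .
    show "f (fg_opp (r2_result G D) h) = fg_opp (r2_result G' (f ` D)) (f h)" using f_op h' by simp
    fix h' assume "h' \<in> fg_hes (r2_result G D)"
    then show "fg_vx (r2_result G D) h = fg_vx (r2_result G D) h' \<longleftrightarrow>
      fg_vx (r2_result G' (f ` D)) (f h) = fg_vx (r2_result G' (f ` D)) (f h')"
      using f_vx h' by simp
  qed
  show ?thesis using c.iso circ f_card_cc[OF D] by (simp add: circ_res)
qed

lemma site_iso: assumes "r2_site G a1 a2 b1 b2"
  shows "r2_site G' (f a1) (f a2) (f b1) (f b2)"
    and "r2_del G' (f a1) (f a2) (f b1) (f b2) = f ` r2_del G a1 a2 b1 b2"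
proof -
  have in4: "a1 \<in> fg_hes G" "a2 \<in> fg_hes G" "b1 \<in> fg_hes G" "b2 \<in> fg_hes G"
    using assms unfolding r2_site_def by auto
  have s: "fg_vx G a1 = fg_vx G a2" "fg_vx G b1 = fg_vx G b2" "fg_vx G a1 \<noteq> fg_vx G b1"
     "fg_ed G a1 = b1" "fg_ed G a2 = b2" "a1 \<noteq> a2" "a2 \<noteq> fg_opp G a1" "b2 \<noteq> fg_opp G b1"
    using assms unfolding r2_site_def by auto
  have o: "fg_opp G a1 \<in> fg_hes G" "fg_opp G b1 \<in> fg_hes G" using in4 g1.op_in by auto
  show "r2_site G' (f a1) (f a2) (f b1) (f b2)"
    unfolding r2_site_def
  proof (intro conjI)
    show "fg_wf G'" by (rule g2.wf)
    show "{f a1, f a2, f b1, f b2} \<subseteq> fg_hes G'" using in4 f_in by simp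
    show "fg_vx G' (f a1) = fg_vx G' (f a2)" using f_vx[of a1 a2] in4 s by simp
    show "fg_vx G' (f b1) = fg_vx G' (f b2)" using f_vx[of b1 b2] in4 s by simp
    show "fg_vx G' (f a1) \<noteq> fg_vx G' (f b1)" using f_vx[of a1 b1] in4 s by simp
    show "fg_ed G' (f a1) = f b1" using f_ed[of a1] in4 s by simp
    show "fg_ed G' (f a2) = f b2" using f_ed[of a2] in4 s by simp
    show "f a1 \<noteq> f a2" using f_inj[of a1 a2] in4 s by simp
    show "f a2 \<noteq> fg_opp G' (f a1)" using f_inj[of a2 "fg_opp G a1"] f_op[of a1] in4 s o by simp
    show "f b2 \<noteq> fg_opp G' (f b1)" using f_inj[of b2 "fg_opp G b1"] f_op[of b1] in4 s o by simp
  qed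
  show "r2_del G' (f a1) (f a2) (f b1) (f b2) = f ` r2_del G a1 a2 b1 b2"
    unfolding r2_del_def using f_op in4 by simp
qed

end

lemma iso_isog: "fg_iso G G' \<Longrightarrow> fg_wf G \<Longrightarrow> fg_wf G' \<Longrightarrow> \<exists>f. isog G G' f"
  unfolding fg_iso_def isog_def isog_axioms_def wfg_def by blast

lemma iso_circ: "fg_iso G G' \<Longrightarrow> fg_circ G = fg_circ G'"
  unfolding fg_iso_def by blast

lemma iso_refl: "fg_iso G G"
  unfolding fg_iso_def by (intro conjI exI[of _ id]) auto

lemma iso_sym: assumes "fg_iso G G'" "fg_wf G" "fg_wf G'" shows "fg_iso G' G"
proof -
  obtain f where "isog G G' f" using iso_isog assms by blast
  then interpret isog G G' f .
  let ?g = "the_inv_into (fg_hes G) f"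
  have g: "bij_betw ?g (fg_hes G') (fg_hes G)" using bij bij_betw_the_inv_into by blast
  have gf: "?g (f x) = x" if "x \<in> fg_hes G" for x using that bij the_inv_into_f_f bij_betw_def by metis
  have fg: "f (?g y) = y" if "y \<in> fg_hes G'" for y using that bij f_the_inv_into_f_bij_betw by metis
  have gin: "?g y \<in> fg_hes G" if "y \<in> fg_hes G'" for y using g that bij_betwE by blast
  show ?thesis unfolding fg_iso_def
  proof (intro conjI exI[of _ ?g] ballI)
    show "fg_circ G' = fg_circ G" using iso_circ assms by simp
    show "bij_betw ?g (fg_hes G') (fg_hes G)" by fact
    fix h assume h: "h \<in> fg_hes G'"
    show "?g (fg_ed G' h) = fg_ed G (?g h)"
      using f_ed[OF gin[OF h]] fg[OF h] gf g1.ed_in gin h by metis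
    show "?g (fg_opp G' h) = fg_opp G (?g h)"
      using f_op[OF gin[OF h]] fg[OF h] gf g1.op_in gin h by metis
    fix h' assume h': "h' \<in> fg_hes G'"
    show "fg_vx G' h = fg_vx G' h' \<longleftrightarrow> fg_vx G (?g h) = fg_vx G (?g h')"
      using f_vx[OF gin[OF h] gin[OF h']] fg h h' by simp
  qed
qed

lemma iso_trans: assumes "fg_iso A B" "fg_iso B C" shows "fg_iso A C"
proof -
  obtain f where f: "bij_betw f (fg_hes A) (fg_hes B)"
    "\<forall>h\<in>fg_hes A. f (fg_ed A h) = fg_ed B (f h)" "\<forall>h\<in>fg_hes A. f (fg_opp A h) = fg_opp B (f h)"
    "\<forall>h\<in>fg_hes A. \<forall>h'\<in>fg_hes A. fg_vx A h = fg_vx A h' \<longleftrightarrow> fg_vx B (f h) = fg_vx B (f h')"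
    using assms(1) unfolding fg_iso_def by blast
  obtain g where g: "bij_betw g (fg_hes B) (fg_hes C)"
    "\<forall>h\<in>fg_hes B. g (fg_ed B h) = fg_ed C (g h)" "\<forall>h\<in>fg_hes B. g (fg_opp B h) = fg_opp C (g h)"
    "\<forall>h\<in>fg_hes B. \<forall>h'\<in>fg_hes B. fg_vx B h = fg_vx B h' \<longleftrightarrow> fg_vx C (g h) = fg_vx C (g h')"
    using assms(2) unfolding fg_iso_def by blast
  have fin: "f h \<in> fg_hes B" if "h \<in> fg_hes A" for h using f(1) that bij_betwE by blast
  show ?thesis unfolding fg_iso_def
  proof (intro conjI exI[of _ "g \<circ> f"] ballI)
    show "fg_circ A = fg_circ C" using assms iso_circ by metis
    show "bij_betw (g \<circ> f) (fg_hes A) (fg_hes C)" using f(1) g(1) bij_betw_trans by blast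
  qed (use f g fin in auto)
qed

lemma site_wf: "r2_site G a1 a2 b1 b2 \<Longrightarrow> fg_wf G" unfolding r2_site_def by blast

lemma dec_wf: assumes "r2dec G G1" shows "fg_wf G" "fg_wf G1"
proof -
  obtain a1 a2 b1 b2 where s: "r2_site G a1 a2 b1 b2" "G1 = r2_result G (r2_del G a1 a2 b1 b2)"
    using assms unfolding r2dec_def by blast
  show w: "fg_wf G" using s site_wf by blast
  interpret wfg G by (rule wfg.intro[OF w])
  interpret wfgD G "r2_del G a1 a2 b1 b2"
    by unfold_locales (auto simp: site_del[OF s(1)])
  show "fg_wf G1" using s res_wf by simp
qed

lemma dec_card: assumes "r2dec G G1" shows "card (fg_hes G1) < card (fg_hes G)"
proof -
  obtain a1 a2 b1 b2 where s: "r2_site G a1 a2 b1 b2" "G1 = r2_result G (r2_del G a1 a2 b1 b2)"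
    using assms unfolding r2dec_def by blast
  have w: "fg_wf G" using s site_wf by blast
  interpret wfg G by (rule wfg.intro[OF w])
  have "a1 \<in> r2_del G a1 a2 b1 b2" "a1 \<in> H" using s(1) unfolding r2_del_def r2_site_def by auto
  then have "H - r2_del G a1 a2 b1 b2 \<subset> H" by blast
  then show ?thesis using s(2) psubset_card_mono[OF fin] by (simp add: r2_result_def)
qed

lemma dec_circ: "r2dec G G1 \<Longrightarrow> fg_circ G \<le> fg_circ G1"
  unfolding r2dec_def by (auto simp: circ_res)

lemma dec_compat: assumes "fg_iso G G'" "fg_wf G'" "r2dec G G1"
  shows "\<exists>G1'. r2dec G' G1' \<and> fg_iso G1 G1'"
proof -
  obtain a1 a2 b1 b2 where s: "r2_site G a1 a2 b1 b2" "G1 = r2_result G (r2_del G a1 a2 b1 b2)"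
    using assms unfolding r2dec_def by blast
  have w: "fg_wf G" using s site_wf by blast
  obtain f where "isog G G' f" using iso_isog assms w by blast
  then interpret isog G G' f .
  have D: "r2_del G a1 a2 b1 b2 = {h\<in>fg_hes G. fg_vx G h = fg_vx G a1 \<or> fg_vx G h = fg_vx G b1}"
    using g1.site_del[OF s(1)] .
  have DH: "r2_del G a1 a2 b1 b2 \<subseteq> fg_hes G" unfolding D by blast
  have Dv: "h' \<in> r2_del G a1 a2 b1 b2" if "h \<in> r2_del G a1 a2 b1 b2" "h' \<in> fg_hes G"
    "fg_vx G h' = fg_vx G h" for h h' using that unfolding D by auto
  have "fg_iso G1 (r2_result G' (f ` r2_del G a1 a2 b1 b2))"
    using res_iso[OF DH Dv iso_circ[OF assms(1)]] s(2) by simp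
  moreover have "r2dec G' (r2_result G' (f ` r2_del G a1 a2 b1 b2))"
    unfolding r2dec_def using site_iso[OF s(1)] by metis
  ultimately show ?thesis by blast
qed

locale bigon = wfg +
  fixes a1 a2 c1 c2 :: nat
  assumes ain: "a1 \<in> fg_hes G" "a2 \<in> fg_hes G"
    and ava: "fg_vx G a2 = fg_vx G a1" and ane: "a2 \<noteq> a1" "a2 \<noteq> fg_opp G a1"
    and e1: "fg_ed G a1 = c1" and e2: "fg_ed G a2 = c2"
    and cvc: "fg_vx G c2 = fg_vx G c1" and cne: "c2 \<noteq> fg_opp G c1"
    and uw: "fg_vx G c1 \<noteq> fg_vx G a1"
begin

definition "Du = {h\<in>H. fg_vx G h = fg_vx G a1}"
definition "Dw = {h\<in>H. fg_vx G h = fg_vx G c1}"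

lemma cin: "c1 \<in> H" "c2 \<in> H" using ain e1 e2 ed_in by auto
lemma cne2: "c2 \<noteq> c1" using ane e1 e2 ain ed_ed by metis
lemma Du_eq: "Du = {a1, op a1, a2, op a2}" unfolding Du_def using vert4 ain ava ane by simp
lemma Dw_eq: "Dw = {c1, op c1, c2, op c2}" unfolding Dw_def using vert4 cin cvc cne cne2 by simp

lemma vx_facts: "fg_vx G (op a1) = fg_vx G a1" "fg_vx G (op a2) = fg_vx G a1"
  "fg_vx G (op c1) = fg_vx G c1" "fg_vx G (op c2) = fg_vx G c1"
  using vx_op ain cin ava cvc by auto

lemma ops_in: "op a1 \<in> H" "op a2 \<in> H" "op c1 \<in> H" "op c2 \<in> H"
  using op_in ain cin by auto

lemma neqA: "a1 \<noteq> op a1" "a2 \<noteq> op a2" "c1 \<noteq> op c1" "c2 \<noteq> op c2"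
    "op a2 \<noteq> a1" "op a2 \<noteq> op a1" "op c2 \<noteq> c1" "op c2 \<noteq> op c1" "op a1 \<noteq> a2" "op c1 \<noteq> c2"
    "a2 \<noteq> a1" "c2 \<noteq> c1"
proof -
  show "a1 \<noteq> op a1" "a2 \<noteq> op a2" "c1 \<noteq> op c1" "c2 \<noteq> op c2"
    using op_neq[of a1] op_neq[of a2] op_neq[of c1] op_neq[of c2] ain cin by auto
  show "op a2 \<noteq> a1" using ane(2) op_op[OF ain(2)] by auto
  show "op a2 \<noteq> op a1" using ane(1) op_op[OF ain(1)] op_op[OF ain(2)] by metis
  show "op c2 \<noteq> c1" using cne op_op[OF cin(2)] by auto
  show "op c2 \<noteq> op c1" using cne2 op_op[OF cin(1)] op_op[OF cin(2)] by metis
  show "op a1 \<noteq> a2" using ane(2) by simp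
  show "op c1 \<noteq> c2" using cne by simp
  show "a2 \<noteq> a1" by (rule ane(1))
  show "c2 \<noteq> c1" by (rule cne2)
qed

lemma neqB: "a1 \<noteq> c1" "a1 \<noteq> op c1" "a1 \<noteq> c2" "a1 \<noteq> op c2" "op a1 \<noteq> c1" "op a1 \<noteq> op c1" "op a1 \<noteq> c2" "op a1 \<noteq> op c2" "a2 \<noteq> c1" "a2 \<noteq> op c1" "a2 \<noteq> c2" "a2 \<noteq> op c2" "op a2 \<noteq> c1" "op a2 \<noteq> op c1" "op a2 \<noteq> c2" "op a2 \<noteq> op c2"
proof -
  have n6: "x \<noteq> y" if "fg_vx G x = fg_vx G a1" "fg_vx G y = fg_vx G c1" for x y
    using that uw by auto
  note v = vx_facts ava cvc
  show "a1 \<noteq> c1" "a1 \<noteq> op c1" "a1 \<noteq> c2" "a1 \<noteq> op c2" "op a1 \<noteq> c1" "op a1 \<noteq> op c1" "op a1 \<noteq> c2" "op a1 \<noteq> op c2" "a2 \<noteq> c1" "a2 \<noteq> op c1" "a2 \<noteq> c2" "a2 \<noteq> op c2" "op a2 \<noteq> c1" "op a2 \<noteq> op c1" "op a2 \<noteq> c2" "op a2 \<noteq> op c2" by (rule n6; simp add: v)+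
qed

lemmas neqs = neqA neqB neqA[symmetric] neqB[symmetric]

lemma P_facts: "P (op a1) = c1" "P (op a2) = c2" "P (op c1) = a1" "P (op c2) = a2"
  unfolding pp_def using ain cin e1 e2 ed_ed by auto

lemma x_facts: "P a1 \<noteq> a1" "P a1 \<noteq> a2" "P a1 \<noteq> op a1" "P a1 \<noteq> c1" "P a1 \<noteq> c2"
  "P a2 \<noteq> a1" "P a2 \<noteq> a2" "P a2 \<noteq> op a2" "P a2 \<noteq> c1" "P a2 \<noteq> c2"
  "P c1 \<noteq> c1" "P c1 \<noteq> c2" "P c1 \<noteq> op c1" "P c1 \<noteq> a1" "P c1 \<noteq> a2"
  "P c2 \<noteq> c1" "P c2 \<noteq> c2" "P c2 \<noteq> op c2" "P c2 \<noteq> a1" "P c2 \<noteq> a2"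
proof -
  have ee: "ed c1 = a1" "ed c2 = a2" using e1 e2 ain ed_ed by auto
  have i: "op a1 \<in> H" "op a2 \<in> H" "op c1 \<in> H" "op c2 \<in> H" by (rule ops_in)+
  have r: "ed x = y \<Longrightarrow> x \<in> H \<Longrightarrow> ed y = x" for x y using ed_ed by blast
  note n = neqs
  show "P a1 \<noteq> a1" "P a1 \<noteq> a2" "P a1 \<noteq> op a1" "P a1 \<noteq> c1" "P a1 \<noteq> c2"
    "P a2 \<noteq> a1" "P a2 \<noteq> a2" "P a2 \<noteq> op a2" "P a2 \<noteq> c1" "P a2 \<noteq> c2"
    "P c1 \<noteq> c1" "P c1 \<noteq> c2" "P c1 \<noteq> op c1" "P c1 \<noteq> a1" "P c1 \<noteq> a2"
    "P c2 \<noteq> c1" "P c2 \<noteq> c2" "P c2 \<noteq> op c2" "P c2 \<noteq> a1" "P c2 \<noteq> a2"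
    unfolding pp_def using r[OF _ i(1)] r[OF _ i(2)] r[OF _ i(3)] r[OF _ i(4)] e1 e2 ee n
      ed_neq[OF i(1)] ed_neq[OF i(2)] ed_neq[OF i(3)] ed_neq[OF i(4)] by metis+
qed

sublocale U: wfgD G Du by unfold_locales (auto simp: Du_def)
sublocale W: wfgD G Dw by unfold_locales (auto simp: Dw_def)

lemma nxt_two: "y \<in> H \<Longrightarrow> P y \<in> D \<Longrightarrow> (P ^^ k) (P y) \<notin> D \<Longrightarrow> nxt G D y = nxt G D (P y)"
proof -
  assume y: "y \<in> H" "P y \<in> D" "(P ^^ k) (P y) \<notin> D"
  have "(P ^^ Suc k) y \<notin> D" using y(3) by (simp only: funpow_Suc_right o_apply) simp
  then show ?thesis using nxt_step[OF exit_any[OF y(1)] y(2)] by blast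
qed

lemma PP: "(P ^^ 1) y = P y" "(P ^^ 2) y = P (P y)" by (simp_all add: numeral_2_eq_2)

lemma nxt_u: assumes "y \<in> H"
  shows "nxt G Du y = (if P y \<notin> Du then P y else if P y = op a1 then c1 else if P y = op a2 then c2
    else if P y = a1 then (if P a1 = op a2 then c2 else P a1) else (if P a2 = op a1 then c1 else P a2))"
proof -
  have Du: "Du = {a1, op a1, a2, op a2}" by (rule Du_eq)
  note n = neqs
  have f1: "nxt G Du (op a1) = c1" using nxt_first[of G "op a1" Du] P_facts n by (simp add: Du)
  have f2: "nxt G Du (op a2) = c2" using nxt_first[of G "op a2" Du] P_facts n by (simp add: Du)
  have g1: "nxt G Du a1 = (if P a1 = op a2 then c2 else P a1)"
  proof (cases "P a1 \<in> Du")
    case True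
    hence e: "P a1 = op a2" using x_facts by (simp add: Du)
    have "(P ^^ 1) (P a1) \<notin> Du" using e P_facts n by (simp add: Du)
    from nxt_two[OF ain(1) True this] have "nxt G Du a1 = nxt G Du (P a1)" .
    then show ?thesis using e f2 by simp
  next
    case False then show ?thesis using nxt_first[of G a1 Du] n by (auto simp: Du)
  qed
  have g2: "nxt G Du a2 = (if P a2 = op a1 then c1 else P a2)"
  proof (cases "P a2 \<in> Du")
    case True
    hence e: "P a2 = op a1" using x_facts by (simp add: Du)
    have "(P ^^ 1) (P a2) \<notin> Du" using e P_facts n by (simp add: Du)
    from nxt_two[OF ain(2) True this] have "nxt G Du a2 = nxt G Du (P a2)" .
    then show ?thesis using e f1 by simp
  next
    case False then show ?thesis using nxt_first[of G a2 Du] n by (auto simp: Du)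
  qed
  show ?thesis
  proof (cases "P y \<in> Du")
    case False then show ?thesis using nxt_first[of G y Du] by simp
  next
    case True
    have ex: "\<exists>k. (P ^^ k) (P y) \<notin> Du"
    proof -
      have "P y = a1 \<or> P y = op a1 \<or> P y = a2 \<or> P y = op a2" using True by (simp add: Du)
      moreover have "(P ^^ 2) a1 \<notin> Du \<or> (P ^^ 1) a1 \<notin> Du" using x_facts P_facts n
        by (auto simp: Du PP)
      moreover have "(P ^^ 2) a2 \<notin> Du \<or> (P ^^ 1) a2 \<notin> Du" using x_facts P_facts n
        by (auto simp: Du PP)
      moreover have "(P ^^ 1) (op a1) \<notin> Du" "(P ^^ 1) (op a2) \<notin> Du" using P_facts n
        by (auto simp: Du)
      ultimately show ?thesis by metis
    qed
    then obtain k where "(P ^^ k) (P y) \<notin> Du" by blast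
    then have "nxt G Du y = nxt G Du (P y)" using nxt_two[OF assms True] by blast
    then show ?thesis using True f1 f2 g1 g2 by (auto simp: Du)
  qed
qed

lemma nxt_w: assumes "y \<in> H"
  shows "nxt G Dw y = (if P y \<notin> Dw then P y else if P y = op c1 then a1 else if P y = op c2 then a2
    else if P y = c1 then (if P c1 = op c2 then a2 else P c1) else (if P c2 = op c1 then a1 else P c2))"
proof -
  have Dw: "Dw = {c1, op c1, c2, op c2}" by (rule Dw_eq)
  note n = neqs
  have f1: "nxt G Dw (op c1) = a1" using nxt_first[of G "op c1" Dw] P_facts n by (simp add: Dw)
  have f2: "nxt G Dw (op c2) = a2" using nxt_first[of G "op c2" Dw] P_facts n by (simp add: Dw)
  have g1: "nxt G Dw c1 = (if P c1 = op c2 then a2 else P c1)"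
  proof (cases "P c1 \<in> Dw")
    case True
    hence e: "P c1 = op c2" using x_facts by (simp add: Dw)
    have "(P ^^ 1) (P c1) \<notin> Dw" using e P_facts n by (simp add: Dw)
    from nxt_two[OF cin(1) True this] have "nxt G Dw c1 = nxt G Dw (P c1)" .
    then show ?thesis using e f2 by simp
  next
    case False then show ?thesis using nxt_first[of G c1 Dw] n by (auto simp: Dw)
  qed
  have g2: "nxt G Dw c2 = (if P c2 = op c1 then a1 else P c2)"
  proof (cases "P c2 \<in> Dw")
    case True
    hence e: "P c2 = op c1" using x_facts by (simp add: Dw)
    have "(P ^^ 1) (P c2) \<notin> Dw" using e P_facts n by (simp add: Dw)
    from nxt_two[OF cin(2) True this] have "nxt G Dw c2 = nxt G Dw (P c2)" .
    then show ?thesis using e f1 by simp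
  next
    case False then show ?thesis using nxt_first[of G c2 Dw] n by (auto simp: Dw)
  qed
  show ?thesis
  proof (cases "P y \<in> Dw")
    case False then show ?thesis using nxt_first[of G y Dw] by simp
  next
    case True
    have ex: "\<exists>k. (P ^^ k) (P y) \<notin> Dw"
    proof -
      have "P y = c1 \<or> P y = op c1 \<or> P y = c2 \<or> P y = op c2" using True by (simp add: Dw)
      moreover have "(P ^^ 2) c1 \<notin> Dw \<or> (P ^^ 1) c1 \<notin> Dw" using x_facts P_facts n
        by (auto simp: Dw PP)
      moreover have "(P ^^ 2) c2 \<notin> Dw \<or> (P ^^ 1) c2 \<notin> Dw" using x_facts P_facts n
        by (auto simp: Dw PP)
      moreover have "(P ^^ 1) (op c1) \<notin> Dw" "(P ^^ 1) (op c2) \<notin> Dw" using P_facts n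
        by (auto simp: Dw)
      ultimately show ?thesis by metis
    qed
    then obtain k where "(P ^^ k) (P y) \<notin> Dw" by blast
    then have "nxt G Dw y = nxt G Dw (P y)" using nxt_two[OF assms True] by blast
    then show ?thesis using True f1 f2 g1 g2 by (auto simp: Dw)
  qed
qed


definition sw :: "nat \<Rightarrow> nat" where
  "sw x = (if x = c1 then op a1 else if x = op a1 then c1 else if x = op c1 then a1 else if x = a1 then op c1
    else if x = c2 then op a2 else if x = op a2 then c2 else if x = op c2 then a2 else if x = a2 then op c2 else x)"

lemma sw_sw: "sw (sw x) = x"
  unfolding sw_def using neqs by auto

lemma sw_Du: "x \<in> Du \<Longrightarrow> sw x \<in> Dw" "x \<in> Dw \<Longrightarrow> sw x \<in> Du"
  "x \<notin> Du \<Longrightarrow> x \<notin> Dw \<Longrightarrow> sw x = x"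
  unfolding sw_def Du_eq Dw_eq using neqs by auto

lemma key: assumes x: "x \<in> H" "x \<notin> Du" shows "sw (nxt G Du x) = nxt G Dw (sw x)"
proof -
  note n = neqs
  note D = Du_eq Dw_eq
  have ee: "ed c1 = a1" "ed c2 = a2" using e1 e2 ain ed_ed by auto
  show ?thesis
  proof (cases "x \<in> Dw")
    case False
    have sx: "sw x = x" using sw_Du False x by simp
    have Pn: "P x \<noteq> a1" "P x \<noteq> a2" "P x \<noteq> c1" "P x \<noteq> c2"
    proof -
      have "P x = P (op c1) \<Longrightarrow> False" using P_inj x ops_in False unfolding inj_on_def by (auto simp: D)
      moreover have "P x = P (op c2) \<Longrightarrow> False" using P_inj x ops_in False unfolding inj_on_def by (auto simp: D)
      moreover have "P x = P (op a1) \<Longrightarrow> False" using P_inj x ops_in unfolding inj_on_def by (auto simp: D)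
      moreover have "P x = P (op a2) \<Longrightarrow> False" using P_inj x ops_in unfolding inj_on_def by (auto simp: D)
      ultimately show "P x \<noteq> a1" "P x \<noteq> a2" "P x \<noteq> c1" "P x \<noteq> c2" using P_facts by auto
    qed
    show ?thesis unfolding sx nxt_u[OF x(1)] nxt_w[OF x(1)] using Pn n x_facts P_facts
      by (auto simp: D sw_def)
  next
    case True
    then have "x = c1 \<or> x = op c1 \<or> x = c2 \<or> x = op c2" by (simp add: D)
    then show ?thesis
    proof (elim disjE)
      assume xe: "x = c1"
      show ?thesis unfolding xe nxt_u[OF cin(1)] sw_def[of c1] using nxt_w[OF ops_in(1)] n x_facts P_facts
        by (auto simp: D sw_def)
    next
      assume xe: "x = c2"
      show ?thesis unfolding xe nxt_u[OF cin(2)] sw_def[of c2] using nxt_w[OF ops_in(2)] n x_facts P_facts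
        by (auto simp: D sw_def)
    next
      assume xe: "x = op c1"
      show ?thesis unfolding xe nxt_u[OF ops_in(3)] using nxt_w[OF ain(1)] n x_facts P_facts
        by (auto simp: D sw_def)
    next
      assume xe: "x = op c2"
      show ?thesis unfolding xe nxt_u[OF ops_in(4)] using nxt_w[OF ain(2)] n x_facts P_facts
        by (auto simp: D sw_def)
    qed
  qed
qed

end



context wfg begin
lemma nxt_twoG: "y \<in> H \<Longrightarrow> P y \<in> D \<Longrightarrow> (P ^^ k) (P y) \<notin> D \<Longrightarrow> nxt G D y = nxt G D (P y)"
proof -
  assume y: "y \<in> H" "P y \<in> D" "(P ^^ k) (P y) \<notin> D"
  have "(P ^^ Suc k) y \<notin> D" using y(3) by (simp only: funpow_Suc_right o_apply) simp
  then show ?thesis using nxt_step[OF exit_any[OF y(1)] y(2)] by blast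
qed
end

context bigon begin

lemma sw_op: assumes "h \<in> H" "h \<notin> Du" shows "sw (op h) = op (sw h)"
proof (cases "h \<in> Dw")
  case True
  then have "h = c1 \<or> h = op c1 \<or> h = c2 \<or> h = op c2" by (simp add: Dw_eq)
  then show ?thesis using neqs ain cin op_op unfolding sw_def by auto
next
  case False
  have "op h \<notin> Du" "op h \<notin> Dw" using U.op_D W.op_D assms False by auto
  then show ?thesis using sw_Du(3) assms False by simp
qed

lemma sw_vx: assumes "h \<in> H" "h \<notin> Du"
  shows "fg_vx G (sw h) = (if h \<in> Dw then fg_vx G a1 else fg_vx G h)"
proof (cases "h \<in> Dw")
  case True
  then have "sw h \<in> Du" using sw_Du by simp
  then show ?thesis using True unfolding Du_def by simp
next
  case False then show ?thesis using sw_Du(3) assms by simp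
qed

lemma cc_Du: "cc G Du = {}"
proof -
  have "\<exists>y\<in>fg_comp G x. y \<notin> Du" if "x \<in> Du" for x
  proof -
    have x4: "x = a1 \<or> x = op a1 \<or> x = a2 \<or> x = op a2" using that by (simp add: Du_eq)
    have o1: "c1 \<in> fg_comp G (op a1)" using P_comp[OF ops_in(1)] P_facts by simp
    have o2: "c2 \<in> fg_comp G (op a2)" using P_comp[OF ops_in(2)] P_facts by simp
    have "fg_comp G (op a1) = fg_comp G a1" using comp_eq op_comp ain by blast
    moreover have "fg_comp G (op a2) = fg_comp G a2" using comp_eq op_comp ain by blast
    moreover have "c1 \<notin> Du" "c2 \<notin> Du" using neqs by (auto simp: Du_eq)
    ultimately show ?thesis using x4 o1 o2 by auto
  qed
  then show ?thesis unfolding cc_def by blast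
qed

lemma cc_Dw: "cc G Dw = {}"
proof -
  have "\<exists>y\<in>fg_comp G x. y \<notin> Dw" if "x \<in> Dw" for x
  proof -
    have x4: "x = c1 \<or> x = op c1 \<or> x = c2 \<or> x = op c2" using that by (simp add: Dw_eq)
    have o1: "a1 \<in> fg_comp G (op c1)" using P_comp[OF ops_in(3)] P_facts by simp
    have o2: "a2 \<in> fg_comp G (op c2)" using P_comp[OF ops_in(4)] P_facts by simp
    have "fg_comp G (op c1) = fg_comp G c1" using comp_eq op_comp cin by blast
    moreover have "fg_comp G (op c2) = fg_comp G c2" using comp_eq op_comp cin by blast
    moreover have "a1 \<notin> Dw" "a2 \<notin> Dw" using neqs by (auto simp: Dw_eq)
    ultimately show ?thesis using x4 o1 o2 by auto
  qed
  then show ?thesis unfolding cc_def by blast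
qed

lemma bigon_iso: "fg_iso (r2_result G Du) (r2_result G Dw)"
proof -
  interpret c: isog "r2_result G Du" "r2_result G Dw" sw
  proof unfold_locales
    have a: "sw ` (H - Du) \<subseteq> H - Dw"
    proof
      fix y assume "y \<in> sw ` (H - Du)"
      then obtain x where x: "x \<in> H" "x \<notin> Du" "y = sw x" by blast
      show "y \<in> H - Dw"
      proof (cases "x \<in> Dw")
        case True
        then have "sw x \<in> Du" using sw_Du by simp
        then show ?thesis using x neqs U.DH by (auto simp: Du_eq Dw_eq)
      next
        case False then show ?thesis using x sw_Du by simp
      qed
    qed
    have b: "sw ` (H - Dw) \<subseteq> H - Du"
    proof
      fix y assume "y \<in> sw ` (H - Dw)"
      then obtain x where x: "x \<in> H" "x \<notin> Dw" "y = sw x" by blast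
      show "y \<in> H - Du"
      proof (cases "x \<in> Du")
        case True
        then have "sw x \<in> Dw" using sw_Du by simp
        then show ?thesis using x neqs W.DH by (auto simp: Du_eq Dw_eq)
      next
        case False then show ?thesis using x sw_Du by simp
      qed
    qed
    show "bij_betw sw (fg_hes (r2_result G Du)) (fg_hes (r2_result G Dw))"
      using bij_betw_byWitness[of "H - Du" sw sw "H - Dw"] sw_sw a b by simp
  next
    fix h assume "h \<in> fg_hes (r2_result G Du)"
    then have h: "h \<in> H" "h \<notin> Du" by auto
    have oh: "op h \<in> H" "op h \<notin> Du" using h op_in U.op_D by auto
    have sh0: "sw h \<in> H \<and> sw h \<notin> Dw"
    proof (cases "h \<in> Dw")
      case True
      then have "sw h \<in> Du" using sw_Du by simp
      then show ?thesis using neqs U.DH by (auto simp: Du_eq Dw_eq)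
    next
      case False then show ?thesis using h sw_Du by simp
    qed
    then have sh: "sw h \<in> H" "sw h \<notin> Dw" by auto
    have "sw (fg_ed (r2_result G Du) h) = sw (nxt G Du (op h))" using U.res_ed h by simp
    also have "\<dots> = nxt G Dw (sw (op h))" using key oh by simp
    also have "\<dots> = nxt G Dw (op (sw h))" using sw_op h by simp
    also have "\<dots> = fg_ed (r2_result G Dw) (sw h)" using W.res_ed sh by simp
    finally show "sw (fg_ed (r2_result G Du) h) = fg_ed (r2_result G Dw) (sw h)" .
    show "sw (fg_opp (r2_result G Du) h) = fg_opp (r2_result G Dw) (sw h)" using sw_op h by simp
    fix h' assume "h' \<in> fg_hes (r2_result G Du)"
    then have h': "h' \<in> H" "h' \<notin> Du" by auto
    have vDw: "x \<in> H \<Longrightarrow> x \<in> Dw \<longleftrightarrow> fg_vx G x = fg_vx G c1" for x unfolding Dw_def by simp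
    have vDu: "x \<in> H \<Longrightarrow> x \<in> Du \<longleftrightarrow> fg_vx G x = fg_vx G a1" for x unfolding Du_def by simp
    show "fg_vx (r2_result G Du) h = fg_vx (r2_result G Du) h' \<longleftrightarrow>
      fg_vx (r2_result G Dw) (sw h) = fg_vx (r2_result G Dw) (sw h')"
      using sw_vx[OF h] sw_vx[OF h'] vDw[OF h(1)] vDw[OF h'(1)] vDu[OF h(1)] vDu[OF h'(1)] h h' uw
      by auto
  qed
  show ?thesis using c.iso by (simp add: circ_res cc_Du cc_Dw)
qed

end

lemma site_sym: assumes "r2_site G a1 a2 b1 b2"
  shows "r2_site G b1 b2 a1 a2" "r2_del G b1 b2 a1 a2 = r2_del G a1 a2 b1 b2"
proof -
  have w: "fg_wf G" using assms site_wf by blast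
  interpret wfg G by (rule wfg.intro[OF w])
  have in4: "a1 \<in> H" "a2 \<in> H" "b1 \<in> H" "b2 \<in> H" using assms unfolding r2_site_def by auto
  have s: "fg_vx G a1 = fg_vx G a2" "fg_vx G b1 = fg_vx G b2" "fg_vx G a1 \<noteq> fg_vx G b1"
     "ed a1 = b1" "ed a2 = b2" "a1 \<noteq> a2" "a2 \<noteq> op a1" "b2 \<noteq> op b1"
    using assms unfolding r2_site_def by auto
  have "b1 \<noteq> b2" using s in4 ed_ed by metis
  moreover have "ed b1 = a1" "ed b2 = a2" using s in4 by auto
  ultimately show "r2_site G b1 b2 a1 a2" unfolding r2_site_def using w in4 s by auto
  show "r2_del G b1 b2 a1 a2 = r2_del G a1 a2 b1 b2" unfolding r2_del_def by auto
qed

lemma vD: assumes "fg_wf G" "r2_site G a1 a2 b1 b2" "fg_vx G x = fg_vx G a1 \<or> fg_vx G x = fg_vx G b1"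
  "x \<in> fg_hes G" shows "x \<in> r2_del G a1 a2 b1 b2"
  using wfg.site_del[OF wfg.intro[OF assms(1)] assms(2)] assms(3,4) by blast

lemma confl_disj:
  assumes s1: "r2_site G a1 a2 b1 b2" and s2: "r2_site G c1 c2 d1 d2"
    and dj: "r2_del G a1 a2 b1 b2 \<inter> r2_del G c1 c2 d1 d2 = {}"
  shows "\<exists>K1 K2. r2dec (r2_result G (r2_del G a1 a2 b1 b2)) K1 \<and>
     r2dec (r2_result G (r2_del G c1 c2 d1 d2)) K2 \<and> fg_iso K1 K2"
proof -
  have w: "fg_wf G" using s1 site_wf by blast
  interpret wfg G by (rule wfg.intro[OF w])
  define D1 where "D1 = r2_del G a1 a2 b1 b2"
  define D2 where "D2 = r2_del G c1 c2 d1 d2"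
  have D1: "D1 = {h\<in>H. fg_vx G h = fg_vx G a1 \<or> fg_vx G h = fg_vx G b1}"
    unfolding D1_def by (rule site_del[OF s1])
  have D2: "D2 = {h\<in>H. fg_vx G h = fg_vx G c1 \<or> fg_vx G h = fg_vx G d1}"
    unfolding D2_def by (rule site_del[OF s2])
  have dj': "D1 \<inter> D2 = {}" using dj D1_def D2_def by simp
  have D1H: "D1 \<subseteq> H" and D2H: "D2 \<subseteq> H" unfolding D1 D2 by auto
  have D1v: "h' \<in> D1" if "h \<in> D1" "h' \<in> H" "fg_vx G h' = fg_vx G h" for h h'
    using that unfolding D1 by auto
  have D2v: "h' \<in> D2" if "h \<in> D2" "h' \<in> H" "fg_vx G h' = fg_vx G h" for h h'
    using that unfolding D2 by auto
  interpret X: wfg2 G D1 D2 by unfold_locales (use D1H D2H D1v D2v dj' in blast)+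
  interpret Y: wfg2 G D2 D1 by unfold_locales (use D1H D2H D1v D2v dj' in blast)+
  have sitein: "r2_site (r2_result G D1) c1 c2 d1 d2"
    if s: "r2_site G c1 c2 d1 d2" and dj: "D1 \<inter> r2_del G c1 c2 d1 d2 = {}"
    and D1v: "D1 \<subseteq> H" "\<And>h h'. h \<in> D1 \<Longrightarrow> h' \<in> H \<Longrightarrow> fg_vx G h' = fg_vx G h \<Longrightarrow> h' \<in> D1"
    for D1 c1 c2 d1 d2
  proof -
    interpret Z: wfgD G D1 by unfold_locales (use D1v in auto)
    have in4: "c1 \<in> H" "c2 \<in> H" "d1 \<in> H" "d2 \<in> H" using s unfolding r2_site_def by auto
    have nd: "c1 \<notin> D1" "c2 \<notin> D1" "d1 \<notin> D1" "d2 \<notin> D1" using dj unfolding r2_del_def by auto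
    have e: "ed c1 = d1" "ed c2 = d2" using s unfolding r2_site_def by auto
    have "fg_ed (r2_result G D1) c1 = d1"
      using Z.res_ed[OF in4(1) nd(1)] nxt_first[of G "op c1" D1] P_op_ed[OF in4(1)] e nd by simp
    moreover have "fg_ed (r2_result G D1) c2 = d2"
      using Z.res_ed[OF in4(2) nd(2)] nxt_first[of G "op c2" D1] P_op_ed[OF in4(2)] e nd by simp
    ultimately show ?thesis using s Z.res_wf in4 nd unfolding r2_site_def by simp
  qed
  have d2: "r2_del (r2_result G D1) c1 c2 d1 d2 = D2" unfolding D2_def r2_del_def by simp
  have d1: "r2_del (r2_result G D2) a1 a2 b1 b2 = D1" unfolding D1_def r2_del_def by simp
  have k1: "r2dec (r2_result G D1) (r2_result (r2_result G D1) D2)"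
    unfolding r2dec_def using sitein[OF s2 dj'[unfolded D2_def]] d2 X.D1H X.D1v by metis
  have k2: "r2dec (r2_result G D2) (r2_result (r2_result G D2) D1)"
    unfolding r2dec_def using sitein[OF s1, of D2] dj' d1 X.D2H X.D2v D1_def by (metis Int_commute)
  have i1: "fg_iso (r2_result (r2_result G D1) D2) (r2_result G (D1 \<union> D2))" by (rule X.res_comp)
  have i2: "fg_iso (r2_result (r2_result G D2) D1) (r2_result G (D1 \<union> D2))"
    using Y.res_comp by (simp add: Un_commute)
  have w2: "fg_wf (r2_result (r2_result G D2) D1)" by (rule Y.B.res_wf)
  have "fg_iso (r2_result (r2_result G D1) D2) (r2_result (r2_result G D2) D1)"
    using iso_trans[OF i1 iso_sym[OF i2 w2 X.C.res_wf]] .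
  then show ?thesis using k1 k2 D1_def D2_def by blast
qed

lemma confl_share:
  assumes s1: "r2_site G a1 a2 b1 b2" and s2: "r2_site G c1 c2 d1 d2"
    and vp: "fg_vx G c1 = fg_vx G b1" and uq: "fg_vx G d1 \<noteq> fg_vx G a1"
  shows "fg_iso (r2_result G (r2_del G a1 a2 b1 b2)) (r2_result G (r2_del G c1 c2 d1 d2))"
proof -
  have w: "fg_wf G" using s1 site_wf by blast
  interpret wfg G by (rule wfg.intro[OF w])
  have in4: "a1 \<in> H" "a2 \<in> H" "b1 \<in> H" "b2 \<in> H" using s1 unfolding r2_site_def by auto
  have in4': "c1 \<in> H" "c2 \<in> H" "d1 \<in> H" "d2 \<in> H" using s2 unfolding r2_site_def by auto
  have t1: "fg_vx G a1 = fg_vx G a2" "fg_vx G b1 = fg_vx G b2" "fg_vx G a1 \<noteq> fg_vx G b1"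
     "ed a1 = b1" "ed a2 = b2" "a1 \<noteq> a2" "a2 \<noteq> op a1" "b2 \<noteq> op b1"
    using s1 unfolding r2_site_def by auto
  have t2: "fg_vx G c1 = fg_vx G c2" "fg_vx G d1 = fg_vx G d2" "fg_vx G c1 \<noteq> fg_vx G d1"
     "ed c1 = d1" "ed c2 = d2" "c1 \<noteq> c2" "c2 \<noteq> op c1" "d2 \<noteq> op d1"
    using s2 unfolding r2_site_def by auto
  have bb: "b1 \<noteq> b2" using t1 in4 ed_ed by metis
  define Dv where "Dv = {h\<in>H. fg_vx G h = fg_vx G b1}"
  have Dv4: "Dv = {b1, op b1, b2, op b2}" unfolding Dv_def using vert4[of b1 b2] in4 t1 bb by simp
  have eb: "ed b1 = a1" "ed b2 = a2" using t1 in4 by auto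
  have cn: "c1 \<noteq> b1" "c1 \<noteq> b2" "c2 \<noteq> b1" "c2 \<noteq> b2"
    using eb t2 t1 uq by metis+
  have c1D: "c1 \<in> Dv" "c2 \<in> Dv" unfolding Dv_def using in4' vp t2 by auto
  have cc: "(c1 = op b1 \<and> c2 = op b2) \<or> (c1 = op b2 \<and> c2 = op b1)"
    using c1D cn t2(6) unfolding Dv4 by auto
  define e1 where "e1 = ed (op b1)"
  define e2 where "e2 = ed (op b2)"
  have ee: "(e1 = d1 \<and> e2 = d2) \<or> (e1 = d2 \<and> e2 = d1)" using cc t2 e1_def e2_def by auto
  have dH: "op d1 \<in> H" "op d2 \<in> H" using in4' op_in by auto
  have eop: "e2 \<noteq> op e1"
  proof -
    have "d1 \<noteq> op d2" using t2(8) op_op[OF in4'(3)] op_op[OF in4'(4)] by metis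
    then show ?thesis using ee t2(8) by auto
  qed
  have evx: "fg_vx G e1 = fg_vx G d1" "fg_vx G e2 = fg_vx G d1" using ee t2 by auto
  have eH: "e1 \<in> H" "e2 \<in> H" using ee in4' by auto
  have Dvv: "D \<subseteq> H" if "D = {h\<in>H. Q h}" for D Q using that by blast
  interpret V: wfgD G Dv by unfold_locales (auto simp: Dv_def)
  let ?Hg = "r2_result G Dv"
  have nD: "a1 \<notin> Dv" "a2 \<notin> Dv" "e1 \<notin> Dv" "e2 \<notin> Dv"
    unfolding Dv_def using t1 t2 evx vp by auto
  have hg_e1: "fg_ed ?Hg a1 = e1"
  proof -
    have "P (op a1) = b1" using P_op_ed in4 t1 by simp
    moreover have "P b1 = e1" unfolding pp_def e1_def by simp
    moreover have "b1 \<in> Dv" unfolding Dv_def using in4 by simp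
    moreover have "(P ^^ 1) (P (op a1)) \<notin> Dv" using calculation nD by simp
    ultimately have "nxt G Dv (op a1) = nxt G Dv b1" using nxt_twoG[of "op a1" Dv 1] op_in in4 by simp
    also have "\<dots> = e1" using nxt_first[of G b1 Dv] \<open>P b1 = e1\<close> nD by simp
    finally show ?thesis using V.res_ed in4 nD by simp
  qed
  have hg_e2: "fg_ed ?Hg a2 = e2"
  proof -
    have "P (op a2) = b2" using P_op_ed in4 t1 by simp
    moreover have "P b2 = e2" unfolding pp_def e2_def by simp
    moreover have "b2 \<in> Dv" unfolding Dv_def using in4 t1 by simp
    moreover have "(P ^^ 1) (P (op a2)) \<notin> Dv" using calculation nD by simp
    ultimately have "nxt G Dv (op a2) = nxt G Dv b2" using nxt_twoG[of "op a2" Dv 1] op_in in4 by simp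
    also have "\<dots> = e2" using nxt_first[of G b2 Dv] \<open>P b2 = e2\<close> nD by simp
    finally show ?thesis using V.res_ed in4 nD by simp
  qed
  interpret B: bigon ?Hg a1 a2 e1 e2
  proof unfold_locales
    show "a1 \<in> fg_hes ?Hg" "a2 \<in> fg_hes ?Hg" using in4 nD by auto
    show "fg_vx ?Hg a2 = fg_vx ?Hg a1" using t1 by simp
    show "a2 \<noteq> a1" "a2 \<noteq> fg_opp ?Hg a1" using t1 by auto
    show "fg_ed ?Hg a1 = e1" "fg_ed ?Hg a2 = e2" by (fact hg_e1, fact hg_e2)
    show "fg_vx ?Hg e2 = fg_vx ?Hg e1" using evx by simp
    show "e2 \<noteq> fg_opp ?Hg e1" using eop by simp
    show "fg_vx ?Hg e1 \<noteq> fg_vx ?Hg a1" using evx uq by simp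
  qed
  have Du: "B.Du = {h\<in>H. fg_vx G h = fg_vx G a1} - Dv" unfolding B.Du_def by auto
  have Dw: "B.Dw = {h\<in>H. fg_vx G h = fg_vx G d1} - Dv" unfolding B.Dw_def using evx by auto
  have Du': "B.Du = {h\<in>H. fg_vx G h = fg_vx G a1}" unfolding Du unfolding Dv_def using t1 by auto
  have Dw': "B.Dw = {h\<in>H. fg_vx G h = fg_vx G d1}" unfolding Dw unfolding Dv_def using t2 vp by auto
  interpret X: wfg2 G Dv B.Du proof unfold_locales
    show "Dv \<subseteq> H" "B.Du \<subseteq> H" unfolding Du' unfolding Dv_def by auto
    show "Dv \<inter> B.Du = {}" unfolding Du by auto
  qed (unfold Du', unfold Dv_def, auto)+
  interpret Y: wfg2 G Dv B.Dw proof unfold_locales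
    show "Dv \<subseteq> H" "B.Dw \<subseteq> H" unfolding Dw' unfolding Dv_def by auto
    show "Dv \<inter> B.Dw = {}" unfolding Dw by auto
  qed (unfold Dw', unfold Dv_def, auto)+
  have D1: "r2_del G a1 a2 b1 b2 = Dv \<union> B.Du" unfolding site_del[OF s1] Du' unfolding Dv_def by auto
  have D2: "r2_del G c1 c2 d1 d2 = Dv \<union> B.Dw" unfolding site_del[OF s2] Dw' unfolding Dv_def using vp by auto
  have i1: "fg_iso (r2_result G (r2_del G a1 a2 b1 b2)) (r2_result ?Hg B.Du)"
    using iso_sym[OF X.res_comp B.U.res_wf X.C.res_wf] D1 by simp
  have i3: "fg_iso (r2_result ?Hg B.Dw) (r2_result G (r2_del G c1 c2 d1 d2))"
    using Y.res_comp D2 by simp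
  show ?thesis using iso_trans[OF iso_trans[OF i1 B.bigon_iso] i3] .
qed

lemma local_confl: assumes "r2dec G G1" "r2dec G G2"
  shows "\<exists>K1 K2. r2dec\<^sup>*\<^sup>* G1 K1 \<and> r2dec\<^sup>*\<^sup>* G2 K2 \<and> fg_iso K1 K2"
proof -
  obtain a1 a2 b1 b2 where s1: "r2_site G a1 a2 b1 b2" "G1 = r2_result G (r2_del G a1 a2 b1 b2)"
    using assms unfolding r2dec_def by blast
  obtain c1 c2 d1 d2 where s2: "r2_site G c1 c2 d1 d2" "G2 = r2_result G (r2_del G c1 c2 d1 d2)"
    using assms unfolding r2dec_def by blast
  have w: "fg_wf G" using s1 site_wf by blast
  interpret wfg G by (rule wfg.intro[OF w])
  define u where "u = fg_vx G a1"
  define v where "v = fg_vx G b1"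
  define p where "p = fg_vx G c1"
  define q where "q = fg_vx G d1"
  have uv: "u \<noteq> v" "p \<noteq> q" using s1 s2 unfolding r2_site_def u_def v_def p_def q_def by auto
  have D1: "r2_del G a1 a2 b1 b2 = {h\<in>H. fg_vx G h = u \<or> fg_vx G h = v}"
    using site_del[OF s1(1)] u_def v_def by simp
  have D2: "r2_del G c1 c2 d1 d2 = {h\<in>H. fg_vx G h = p \<or> fg_vx G h = q}"
    using site_del[OF s2(1)] p_def q_def by simp
  have isoG: "\<exists>K1 K2. r2dec\<^sup>*\<^sup>* G1 K1 \<and> r2dec\<^sup>*\<^sup>* G2 K2 \<and> fg_iso K1 K2" if "fg_iso G1 G2"
    using that by blast
  consider "{u, v} = {p, q}" | "{u, v} \<inter> {p, q} = {}" | "p = v \<and> q \<noteq> u" | "p = u \<and> q \<noteq> v"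
    | "q = v \<and> p \<noteq> u" | "q = u \<and> p \<noteq> v" using uv by blast
  then show ?thesis
  proof cases
    case 1
    then have "r2_del G a1 a2 b1 b2 = r2_del G c1 c2 d1 d2" unfolding D1 D2 by (auto simp: doubleton_eq_iff)
    then show ?thesis using s1 s2 iso_refl by auto
  next
    case 2
    then have "r2_del G a1 a2 b1 b2 \<inter> r2_del G c1 c2 d1 d2 = {}" unfolding D1 D2 by auto
    then obtain K1 K2 where "r2dec G1 K1" "r2dec G2 K2" "fg_iso K1 K2"
      using confl_disj[OF s1(1) s2(1)] s1 s2 by blast
    then show ?thesis by blast
  next
    case 3
    then show ?thesis using isoG confl_share[OF s1(1) s2(1)] s1 s2 unfolding u_def v_def p_def q_def by simp
  next
    case 4
    have "fg_iso (r2_result G (r2_del G b1 b2 a1 a2)) (r2_result G (r2_del G c1 c2 d1 d2))"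
      using confl_share[OF site_sym(1)[OF s1(1)] s2(1)] 4 unfolding u_def v_def p_def q_def by simp
    then show ?thesis using isoG site_sym(2)[OF s1(1)] s1 s2 by simp
  next
    case 5
    have "fg_iso (r2_result G (r2_del G a1 a2 b1 b2)) (r2_result G (r2_del G d1 d2 c1 c2))"
      using confl_share[OF s1(1) site_sym(1)[OF s2(1)]] 5 unfolding u_def v_def p_def q_def by simp
    then show ?thesis using isoG site_sym(2)[OF s2(1)] s1 s2 by simp
  next
    case 6
    have "fg_iso (r2_result G (r2_del G b1 b2 a1 a2)) (r2_result G (r2_del G d1 d2 c1 c2))"
      using confl_share[OF site_sym(1)[OF s1(1)] site_sym(1)[OF s2(1)]] 6
      unfolding u_def v_def p_def q_def by simp
    then show ?thesis using isoG site_sym(2)[OF s1(1)] site_sym(2)[OF s2(1)] s1 s2 by simp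
  qed
qed



abbreviation "nf G N \<equiv> r2dec\<^sup>*\<^sup>* G N \<and> r2_irreducible N"

lemma steps_wf: "r2dec\<^sup>*\<^sup>* G N \<Longrightarrow> fg_wf G \<Longrightarrow> fg_wf N"
  by (induction rule: rtranclp_induct) (auto dest: dec_wf)

lemma steps_circ: "r2dec\<^sup>*\<^sup>* G N \<Longrightarrow> fg_circ G \<le> fg_circ N"
  by (induction rule: rtranclp_induct) (auto dest: dec_circ)

lemma nf_exists: "fg_wf G \<Longrightarrow> \<exists>N. nf G N"
proof (induction "card (fg_hes G)" arbitrary: G rule: less_induct)
  case less
  show ?case
  proof (cases "r2_irreducible G")
    case True then show ?thesis by blast
  next
    case False
    then obtain G1 where g1: "r2dec G G1" unfolding r2_irreducible_def by blast
    then have "card (fg_hes G1) < card (fg_hes G)" "fg_wf G1" using dec_card dec_wf by auto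
    then obtain N where "nf G1 N" using less by blast
    then show ?thesis using g1 by (meson converse_rtranclp_into_rtranclp)
  qed
qed

lemma lift: "r2dec\<^sup>*\<^sup>* G N \<Longrightarrow> fg_iso G G' \<Longrightarrow> fg_wf G' \<Longrightarrow> \<exists>N'. r2dec\<^sup>*\<^sup>* G' N' \<and> fg_iso N N'"
proof (induction rule: rtranclp_induct)
  case base then show ?case by blast
next
  case (step y z)
  obtain y' where y': "r2dec\<^sup>*\<^sup>* G' y'" "fg_iso y y'" using step by blast
  have "fg_wf y'" using steps_wf y'(1) step.prems by blast
  then obtain z' where "r2dec y' z'" "fg_iso z z'" using dec_compat[OF y'(2) _ step.hyps(2)] by blast
  then show ?case using y' by (meson rtranclp.rtrancl_into_rtrancl)
qed

lemma irr_iso: "fg_iso N N' \<Longrightarrow> fg_wf N \<Longrightarrow> fg_wf N' \<Longrightarrow> r2_irreducible N \<Longrightarrow> r2_irreducible N'"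
  unfolding r2_irreducible_def using dec_compat iso_sym by blast

lemma nf_unique_aux:
  "fg_wf G \<Longrightarrow> nf G N1 \<Longrightarrow> nf G N2 \<Longrightarrow> fg_iso N1 N2"
proof (induction "card (fg_hes G)" arbitrary: G N1 N2 rule: less_induct)
  case less
  have w: "fg_wf G" by fact
  have "G = N1 \<or> (\<exists>G1. r2dec G G1 \<and> r2dec\<^sup>*\<^sup>* G1 N1)"
    using less.prems(2) by (rule conjE) (erule converse_rtranclpE; blast)
  moreover have "G = N2 \<or> (\<exists>G2. r2dec G G2 \<and> r2dec\<^sup>*\<^sup>* G2 N2)"
    using less.prems(3) by (rule conjE) (erule converse_rtranclpE; blast)
  ultimately show ?case
  proof (elim disjE exE conjE)
    assume "G = N1" "G = N2" then show ?thesis using iso_refl by simp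
  next
    fix G2 assume "G = N1" "r2dec G G2" then show ?thesis using less.prems unfolding r2_irreducible_def by blast
  next
    fix G1 assume "G = N2" "r2dec G G1" then show ?thesis using less.prems unfolding r2_irreducible_def by blast
  next
    fix G1 G2 assume g1: "r2dec G G1" "r2dec\<^sup>*\<^sup>* G1 N1" and g2: "r2dec G G2" "r2dec\<^sup>*\<^sup>* G2 N2"
    obtain K1 K2 where k: "r2dec\<^sup>*\<^sup>* G1 K1" "r2dec\<^sup>*\<^sup>* G2 K2" "fg_iso K1 K2"
      using local_confl[OF g1(1) g2(1)] by blast
    have w1: "fg_wf G1" "fg_wf G2" using g1 g2 dec_wf by auto
    have c1: "card (fg_hes G1) < card (fg_hes G)" "card (fg_hes G2) < card (fg_hes G)"
      using g1 g2 dec_card by auto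
    have wk: "fg_wf K1" "fg_wf K2" using k w1 steps_wf by auto
    obtain M where M: "nf K1 M" using nf_exists wk by blast
    have wM: "fg_wf M" using M wk steps_wf by blast
    have i1: "fg_iso N1 M" using less.hyps[OF c1(1) w1(1) _ ] less.prems g1 M k
      by (meson rtranclp_trans)
    obtain M' where M': "r2dec\<^sup>*\<^sup>* K2 M'" "fg_iso M M'" using lift[OF M[THEN conjunct1] k(3) wk(2)] by blast
    have wM': "fg_wf M'" using M' wk steps_wf by blast
    have irM': "r2_irreducible M'" using irr_iso[OF M'(2) wM wM'] M by blast
    have i2: "fg_iso M' N2" using less.hyps[OF c1(2) w1(2)] less.prems g2 M' k irM'
      by (meson rtranclp_trans)
    show ?thesis using iso_trans[OF iso_trans[OF i1 M'(2)] i2] .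
  qed
qed

lemma eq_nf: assumes "r2eq G G'" "fg_wf G"
  shows "fg_wf G' \<and> (\<forall>N N'. nf G N \<longrightarrow> nf G' N' \<longrightarrow> fg_iso N N')"
  using assms(1) unfolding r2eq_def
proof (induction rule: equivclp_induct)
  case base then show ?case using nf_unique_aux assms(2) by blast
next
  case (step y z)
  have wy: "fg_wf y" using step.IH by blast
  have wz: "fg_wf z" using step.hyps(2) by blast
  obtain M where M: "nf y M" using nf_exists wy by blast
  have wM: "fg_wf M" using M wy steps_wf by blast
  have key: "fg_iso M N'" if "nf z N'" for N'
  proof -
    have wN': "fg_wf N'" using that wz steps_wf by blast
    from step.hyps(2) consider "fg_iso y z" | "r2dec y z" | "fg_iso z y" | "r2dec z y" by blast
    then show ?thesis
    proof cases
      case 1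
      obtain M' where M': "r2dec\<^sup>*\<^sup>* z M'" "fg_iso M M'" using lift[OF M[THEN conjunct1] 1 wz] by blast
      have wM': "fg_wf M'" using M' wz steps_wf by blast
      have "r2_irreducible M'" using irr_iso[OF M'(2) wM wM'] M by blast
      then have "fg_iso M' N'" using nf_unique_aux[OF wz] M' that by blast
      then show ?thesis using iso_trans M'(2) by blast
    next
      case 2
      then have "nf y N'" using that by (meson converse_rtranclp_into_rtranclp)
      then show ?thesis using nf_unique_aux[OF wy] M by blast
    next
      case 3
      have 1: "fg_iso y z" using iso_sym[OF 3 wz wy] .
      obtain M' where M': "r2dec\<^sup>*\<^sup>* z M'" "fg_iso M M'" using lift[OF M[THEN conjunct1] 1 wz] by blast
      have wM': "fg_wf M'" using M' wz steps_wf by blast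
      have "r2_irreducible M'" using irr_iso[OF M'(2) wM wM'] M by blast
      then have "fg_iso M' N'" using nf_unique_aux[OF wz] M' that by blast
      then show ?thesis using iso_trans M'(2) by blast
    next
      case 4
      then have "nf z M" using M by (meson converse_rtranclp_into_rtranclp)
      then show ?thesis using nf_unique_aux[OF wz] that by blast
    qed
  qed
  show ?case
  proof (intro conjI allI impI)
    show "fg_wf z" by fact
    fix N N' assume "nf G N" "nf z N'"
    then have "fg_iso N M" using step.IH M by blast
    then show "fg_iso N N'" using key \<open>nf z N'\<close> iso_trans by blast
  qed
qed

lemma steps_eq: "r2dec\<^sup>*\<^sup>* G G' \<Longrightarrow> fg_wf G \<Longrightarrow> r2eq G G'"
proof (induction rule: rtranclp_induct)
  case base then show ?case unfolding r2eq_def by simp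
next
  case (step y z)
  have "fg_wf y" using steps_wf step by blast
  then have "(\<lambda>G G'. fg_wf G \<and> fg_wf G' \<and> (fg_iso G G' \<or> r2dec G G')) y z"
    using step.hyps(2) dec_wf by blast
  then have "equivclp (\<lambda>G G'. fg_wf G \<and> fg_wf G' \<and> (fg_iso G G' \<or> r2dec G G')) y z"
    by (rule r_into_equivclp)
  moreover have "equivclp (\<lambda>G G'. fg_wf G \<and> fg_wf G' \<and> (fg_iso G G' \<or> r2dec G G')) G y"
    using step.IH step.prems unfolding r2eq_def by blast
  ultimately show ?case unfolding r2eq_def by (rule transpD[OF transp_equivclp, rotated])
qed

theorem mainTheorem1:
  shows
   "(\<forall>G. fg_wf G \<and> fg_ucomp G = 1 \<longrightarrow>
       (\<exists>R. fg_wf R \<and> r2_irreducible R \<and> r2dec\<^sup>*\<^sup>* G R \<and>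
            (\<forall>R'. fg_wf R' \<and> r2_irreducible R' \<and> r2eq G R' \<longrightarrow> fg_iso R R'))) \<and>
    (\<forall>G. fg_wf G \<longrightarrow>
       (\<not> zero_tilde G \<longrightarrow>
          (\<exists>R. fg_wf R \<and> r2_irreducible_tilde R \<and> r2dec\<^sup>*\<^sup>* G R \<and>
               (\<forall>R'. fg_wf R' \<and> r2_irreducible_tilde R' \<and> r2eq G R' \<longrightarrow> fg_iso R R'))) \<and>
       (zero_tilde G \<longrightarrow> (\<exists>R. r2dec\<^sup>*\<^sup>* G R \<and> 0 < fg_circ R)) \<and>
       (\<forall>G'. r2dec\<^sup>*\<^sup>* G G' \<and> 0 < fg_circ G' \<longrightarrow> zero_tilde G))"
proof (intro conjI allI impI)
  fix G assume "fg_wf G \<and> fg_ucomp G = 1"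
  then have w: "fg_wf G" by blast
  obtain N where N: "nf G N" using nf_exists w by blast
  have wN: "fg_wf N" using N w steps_wf by blast
  show "\<exists>R. fg_wf R \<and> r2_irreducible R \<and> r2dec\<^sup>*\<^sup>* G R \<and>
            (\<forall>R'. fg_wf R' \<and> r2_irreducible R' \<and> r2eq G R' \<longrightarrow> fg_iso R R')"
  proof (intro exI conjI allI impI)
    show "fg_wf N" "r2_irreducible N" "r2dec\<^sup>*\<^sup>* G N" using wN N by auto
    fix R' assume "fg_wf R' \<and> r2_irreducible R' \<and> r2eq G R'"
    then show "fg_iso N R'" using eq_nf[of G R'] w N by blast
  qed
next
  fix G assume w: "fg_wf G"
  obtain N where N: "nf G N" using nf_exists w by blast
  have wN: "fg_wf N" using N w steps_wf by blast
  {
    assume nz: "\<not> zero_tilde G"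
    have "fg_circ N = 0"
    proof (rule ccontr)
      assume "fg_circ N \<noteq> 0"
      then have "zero_tilde G" unfolding zero_tilde_def using steps_eq N w by blast
      then show False using nz by blast
    qed
    show "\<exists>R. fg_wf R \<and> r2_irreducible_tilde R \<and> r2dec\<^sup>*\<^sup>* G R \<and>
               (\<forall>R'. fg_wf R' \<and> r2_irreducible_tilde R' \<and> r2eq G R' \<longrightarrow> fg_iso R R')"
    proof (intro exI conjI allI impI)
      show "fg_wf N" "r2_irreducible_tilde N" "r2dec\<^sup>*\<^sup>* G N"
        using wN N \<open>fg_circ N = 0\<close> unfolding r2_irreducible_tilde_def r2_irreducible_def by auto
      fix R' assume "fg_wf R' \<and> r2_irreducible_tilde R' \<and> r2eq G R'"
      then show "fg_iso N R'" using eq_nf[of G R'] w N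
        unfolding r2_irreducible_tilde_def r2_irreducible_def by blast
    qed
  }
  {
    assume "zero_tilde G"
    then obtain G' where G': "r2eq G G'" "0 < fg_circ G'" unfolding zero_tilde_def by blast
    have e: "fg_wf G' \<and> (\<forall>N N'. nf G N \<longrightarrow> nf G' N' \<longrightarrow> fg_iso N N')" using eq_nf[OF G'(1) w] .
    obtain N' where N': "nf G' N'" using nf_exists e by blast
    have "fg_iso N N'" using e N N' by blast
    then have "fg_circ N = fg_circ N'" using iso_circ by blast
    moreover have "fg_circ G' \<le> fg_circ N'" using steps_circ N' by blast
    ultimately show "\<exists>R. r2dec\<^sup>*\<^sup>* G R \<and> 0 < fg_circ R" using N G' by (intro exI[of _ N]) auto
  }
  fix G' assume "r2dec\<^sup>*\<^sup>* G G' \<and> 0 < fg_circ G'"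
  then show "zero_tilde G" unfolding zero_tilde_def using steps_eq w by blast
qed


end
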